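(* Let $V:[0,\infty)\to\mathbb{R}$ be càdlàg with finite variation on compact intervals, let $f:\mathbb{R}\to\mathbb{R}$ be of class $\mathcal{C}^1$, and let $t>0$. Then $\ell^x(t)$ is well defined (finite) for every simple level $x$, hence for Lebesgue-almost every $x$. The function $x\mapsto\ell^x(t)$ is measurable, $x\mapsto f'(x)\ell^x(t)$ is Lebesgue integrable, and $$f(V(t))-f(V(0))=\int_{\mathbb{R}} f'(x)\,\ell^x(t)\,{\rm d}x+\sum_{0<s\le t}\big(f(V(s))-f(V(s-))\big).$$
   Context: $V(s-)$ is the left limit and $\Delta V(s)=V(s)-V(s-)$. A level $x\in\mathbb{R}$ is simple for $V$ if two conditions hold. First, the set $\{t>0: V(t-)<x<V(t)\text{ or }V(t)<x<V(t-)\text{ or }V(t)=x\}$ is discrete. Second, there is no $t>0$ with $\Delta V(t)\ne0$ and $x\in\{V(t),V(t-)\}$. Non-simple levels form a Lebesgue-null set. We write $t\in\mathcal{I}(x)$ (i.e. $V$ increases through level $x$ at time $t$) if two conditions hold. First, $V(t)=x$ and $V$ is continuous at $t$. Second, there is $\delta>0$ such that for all $s\ge0$ with $0<|s-t|<\delta$, $V(s)-V(t)$ has the same strict sign as $s-t$. We write $t\in\mathcal{D}(x)$ (i.e. $V$ decreases through level $x$ at time $t$) if $-V$ increases through $-x$ at time $t$. Finally $\ell^x(t)=\mathrm{Card}((0,t]\cap\mathcal{I}(x))-\mathrm{Card}((0,t]\cap\mathcal{D}(x))$. *)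

theory Defs
  imports "HOL-Analysis.Analysis"
begin

definition vleft :: "(real \<Rightarrow> real) \<Rightarrow> real \<Rightarrow> real" where
  "vleft V s = Lim (at_left s) V"

definition cadlag :: "(real \<Rightarrow> real) \<Rightarrow> bool" where
  "cadlag V \<longleftrightarrow> (\<forall>s\<ge>0. continuous (at_right s) V) \<and>
                 (\<forall>s>0. \<exists>L. (V \<longlongrightarrow> L) (at_left s))"

definition bounded_variation_on :: "(real \<Rightarrow> real) \<Rightarrow> real \<Rightarrow> real \<Rightarrow> bool" where
  "bounded_variation_on V a b \<longleftrightarrow>
     (\<exists>B. \<forall>(n::nat) (p::nat \<Rightarrow> real).
        a \<le> p 0 \<and> p n \<le> b \<and> (\<forall>i<n. p i \<le> p (Suc i)) \<longrightarrow>
        (\<Sum>i<n. \<bar>V (p (Suc i)) - V (p i)\<bar>) \<le> B)"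

definition finite_variation :: "(real \<Rightarrow> real) \<Rightarrow> bool" where
  "finite_variation V \<longleftrightarrow> (\<forall>T\<ge>0. bounded_variation_on V 0 T)"

definition crossing_times :: "(real \<Rightarrow> real) \<Rightarrow> real \<Rightarrow> real set" where
  "crossing_times V x = {t. t > 0 \<and> ((vleft V t < x \<and> x < V t) \<or> (V t < x \<and> x < vleft V t) \<or> V t = x)}"

text \<open>Simple level. "Discrete" is read as: no accumulation point in [0,infinity),
  i.e. finitely many points in every bounded interval.\<close>
definition simple_level :: "(real \<Rightarrow> real) \<Rightarrow> real \<Rightarrow> bool" where
  "simple_level V x \<longleftrightarrow>
     (\<forall>T. finite (crossing_times V x \<inter> {0..T})) \<and>
     \<not> (\<exists>t>0. V t - vleft V t \<noteq> 0 \<and> (x = V t \<or> x = vleft V t))"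

definition incr_through :: "(real \<Rightarrow> real) \<Rightarrow> real \<Rightarrow> real \<Rightarrow> bool" where
  "incr_through V x t \<longleftrightarrow> V t = x \<and> continuous (at t within {0..}) V \<and>
     (\<exists>\<delta>>0. \<forall>s\<ge>0. 0 < \<bar>s - t\<bar> \<and> \<bar>s - t\<bar> < \<delta> \<longrightarrow> sgn (V s - V t) = sgn (s - t))"

definition decr_through :: "(real \<Rightarrow> real) \<Rightarrow> real \<Rightarrow> real \<Rightarrow> bool" where
  "decr_through V x t \<longleftrightarrow> incr_through (\<lambda>s. - V s) (- x) t"

definition upcross_set :: "(real \<Rightarrow> real) \<Rightarrow> real \<Rightarrow> real \<Rightarrow> real set" where
  "upcross_set V x t = {s \<in> {0<..t}. incr_through V x s}"

definition downcross_set :: "(real \<Rightarrow> real) \<Rightarrow> real \<Rightarrow> real \<Rightarrow> real set" where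
  "downcross_set V x t = {s \<in> {0<..t}. decr_through V x s}"

text \<open>Local time ell^x(t) (meaningful when both sets are finite).\<close>
definition ell :: "(real \<Rightarrow> real) \<Rightarrow> real \<Rightarrow> real \<Rightarrow> int" where
  "ell V x t = int (card (upcross_set V x t)) - int (card (downcross_set V x t))"

end

theory Submission
  imports Defs
begin

context
  fixes V :: "real \<Rightarrow> real"
  assumes cad: "cadlag V"
begin

lemma vleft_tendsto: "s > 0 \<Longrightarrow> (V \<longlongrightarrow> vleft V s) (at_left s)"
  using cad unfolding cadlag_def vleft_def by (metis tendsto_Lim trivial_limit_at_left_real)

lemma right_tendsto: "s \<ge> 0 \<Longrightarrow> (V \<longlongrightarrow> V s) (at_right s)"
  using cad unfolding cadlag_def continuous_within by auto

lemma right_gt: "s \<ge> 0 \<Longrightarrow> V s > x \<Longrightarrow> \<exists>d>0. \<forall>r. s \<le> r \<longrightarrow> r < s + d \<longrightarrow> V r > x"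
proof -
  assume s: "s \<ge> 0" and v: "V s > x"
  have "eventually (\<lambda>r. V r > x) (at_right s)"
    using order_tendstoD(1)[OF right_tendsto[OF s] v] .
  then obtain b where b: "b > s" "\<And>y. y > s \<Longrightarrow> y < b \<Longrightarrow> V y > x"
    unfolding eventually_at_right_field by blast
  show ?thesis
    apply (rule exI[of _ "b - s"]) using b v by (auto simp: le_less)
qed

lemma right_lt: "s \<ge> 0 \<Longrightarrow> V s < x \<Longrightarrow> \<exists>d>0. \<forall>r. s \<le> r \<longrightarrow> r < s + d \<longrightarrow> V r < x"
proof -
  assume s: "s \<ge> 0" and v: "V s < x"
  have "eventually (\<lambda>r. V r < x) (at_right s)"
    using order_tendstoD(2)[OF right_tendsto[OF s] v] .
  then obtain b where b: "b > s" "\<And>y. y > s \<Longrightarrow> y < b \<Longrightarrow> V y < x"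
    unfolding eventually_at_right_field by blast
  show ?thesis
    apply (rule exI[of _ "b - s"]) using b v by (auto simp: le_less)
qed

lemma left_lt: "s > 0 \<Longrightarrow> vleft V s < x \<Longrightarrow> \<exists>d>0. \<forall>r. s - d < r \<longrightarrow> r < s \<longrightarrow> V r < x"
proof -
  assume s: "s > 0" and v: "vleft V s < x"
  have "eventually (\<lambda>r. V r < x) (at_left s)"
    using order_tendstoD(2)[OF vleft_tendsto[OF s] v] .
  then obtain b where b: "b < s" "\<And>y. b < y \<Longrightarrow> y < s \<Longrightarrow> V y < x"
    unfolding eventually_at_left_field by blast
  show ?thesis
    apply (rule exI[of _ "s - b"]) using b v by auto
qed

lemma left_gt: "s > 0 \<Longrightarrow> vleft V s > x \<Longrightarrow> \<exists>d>0. \<forall>r. s - d < r \<longrightarrow> r < s \<longrightarrow> V r > x"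
proof -
  assume s: "s > 0" and v: "vleft V s > x"
  have "eventually (\<lambda>r. V r > x) (at_left s)"
    using order_tendstoD(1)[OF vleft_tendsto[OF s] v] .
  then obtain b where b: "b < s" "\<And>y. b < y \<Longrightarrow> y < s \<Longrightarrow> V y > x"
    unfolding eventually_at_left_field by blast
  show ?thesis
    apply (rule exI[of _ "s - b"]) using b v by auto
qed

lemma cont_at: "s > 0 \<Longrightarrow> vleft V s = V s \<Longrightarrow> isCont V s"
  unfolding isCont_def using vleft_tendsto[of s] right_tendsto[of s]
  by (auto intro: filterlim_split_at)

lemma vleft_le: "s > 0 \<Longrightarrow> (\<And>r. 0 < r \<Longrightarrow> r < s \<Longrightarrow> V r \<le> c) \<Longrightarrow> vleft V s \<le> c"
proof -
  assume s: "s > 0" and h: "\<And>r. 0 < r \<Longrightarrow> r < s \<Longrightarrow> V r \<le> c"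
  have "eventually (\<lambda>r. V r \<le> c) (at_left s)"
    unfolding eventually_at_left_field using s h by (intro exI[of _ 0]) auto
  then show ?thesis using tendsto_upperbound[OF vleft_tendsto[OF s]] by auto
qed

lemma vleft_ge: "s > 0 \<Longrightarrow> (\<And>r. 0 < r \<Longrightarrow> r < s \<Longrightarrow> V r \<ge> c) \<Longrightarrow> vleft V s \<ge> c"
proof -
  assume s: "s > 0" and h: "\<And>r. 0 < r \<Longrightarrow> r < s \<Longrightarrow> V r \<ge> c"
  have "eventually (\<lambda>r. V r \<ge> c) (at_left s)"
    unfolding eventually_at_left_field using s h by (intro exI[of _ 0]) auto
  then show ?thesis using tendsto_lowerbound[OF vleft_tendsto[OF s]] by auto
qed

end

context
  fixes V :: "real \<Rightarrow> real"
  assumes cad: "cadlag V"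
begin

lemma NC_lt:
  assumes NJ: "\<And>\<tau>. \<tau> > 0 \<Longrightarrow> V \<tau> \<noteq> vleft V \<tau> \<Longrightarrow> x \<noteq> vleft V \<tau>"
    and a: "0 \<le> a" and va: "V a < x"
    and nc: "\<And>\<tau>. a < \<tau> \<Longrightarrow> \<tau> \<le> b \<Longrightarrow> \<tau> \<notin> crossing_times V x"
    and s: "a \<le> s" "s \<le> b"
  shows "V s < x"
proof (rule ccontr)
  assume "\<not> V s < x"
  define A where "A = {r\<in>{a..b}. V r \<ge> x}"
  have sA: "s \<in> A" using s \<open>\<not> V s < x\<close> by (auto simp: A_def)
  have bdd: "bdd_below A" unfolding A_def by (rule bdd_belowI[of _ a]) auto
  define \<tau> where "\<tau> = Inf A"
  have lowA: "\<And>r. r \<in> A \<Longrightarrow> \<tau> \<le> r" unfolding \<tau>_def using bdd by (simp add: cInf_lower)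
  obtain d where d: "d > 0" "\<And>r. a \<le> r \<Longrightarrow> r < a + d \<Longrightarrow> V r < x"
    using right_lt[OF cad a va] by blast
  have "a + d \<le> \<tau>" unfolding \<tau>_def
    apply (rule cInf_greatest) using sA apply blast
    using d by (force simp: A_def not_less[symmetric])
  hence ta: "a < \<tau>" using d by auto
  have tb: "\<tau> \<le> b" using lowA[OF sA] s by auto
  have below: "\<And>r. a \<le> r \<Longrightarrow> r < \<tau> \<Longrightarrow> V r < x"
  proof -
    fix r assume "a \<le> r" "r < \<tau>"
    hence "r \<notin> A" using lowA by force
    thus "V r < x" using \<open>a \<le> r\<close> \<open>r < \<tau>\<close> tb by (auto simp: A_def)
  qed
  have vt: "V \<tau> \<ge> x"
  proof (rule ccontr)
    assume "\<not> V \<tau> \<ge> x"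
    then obtain d' where d': "d' > 0" "\<And>r. \<tau> \<le> r \<Longrightarrow> r < \<tau> + d' \<Longrightarrow> V r < x"
      using right_lt[OF cad, of \<tau> x] ta a by auto
    have "\<tau> + d' \<le> \<tau>" unfolding \<tau>_def[symmetric]
      apply (subst (2) \<tau>_def) apply (rule cInf_greatest) using sA apply blast
      using d' below by (force simp: A_def not_less[symmetric])
    thus False using d' by auto
  qed
  have t0: "\<tau> > 0" using ta a by auto
  have vl: "vleft V \<tau> \<le> x"
  proof -
    have "eventually (\<lambda>r. V r \<le> x) (at_left \<tau>)"
      unfolding eventually_at_left_field using ta below
      by (intro exI[of _ a]) (auto intro: less_imp_le)
    then show ?thesis using tendsto_upperbound[OF vleft_tendsto[OF cad t0]] by auto
  qed
  have "\<tau> \<in> crossing_times V x"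
  proof (cases "V \<tau> = x")
    case True thus ?thesis using t0 by (auto simp: crossing_times_def)
  next
    case False
    hence "V \<tau> > x" using vt by auto
    moreover have "vleft V \<tau> \<noteq> x" using NJ[OF t0] \<open>V \<tau> > x\<close> by auto
    ultimately show ?thesis using vl t0 by (auto simp: crossing_times_def)
  qed
  thus False using nc ta tb by auto
qed

lemma NC_gt:
  assumes NJ: "\<And>\<tau>. \<tau> > 0 \<Longrightarrow> V \<tau> \<noteq> vleft V \<tau> \<Longrightarrow> x \<noteq> vleft V \<tau>"
    and a: "0 \<le> a" and va: "V a > x"
    and nc: "\<And>\<tau>. a < \<tau> \<Longrightarrow> \<tau> \<le> b \<Longrightarrow> \<tau> \<notin> crossing_times V x"
    and s: "a \<le> s" "s \<le> b"
  shows "V s > x"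
proof (rule ccontr)
  assume "\<not> V s > x"
  define A where "A = {r\<in>{a..b}. V r \<le> x}"
  have sA: "s \<in> A" using s \<open>\<not> V s > x\<close> by (auto simp: A_def)
  have bdd: "bdd_below A" unfolding A_def by (rule bdd_belowI[of _ a]) auto
  define \<tau> where "\<tau> = Inf A"
  have lowA: "\<And>r. r \<in> A \<Longrightarrow> \<tau> \<le> r" unfolding \<tau>_def using bdd by (simp add: cInf_lower)
  obtain d where d: "d > 0" "\<And>r. a \<le> r \<Longrightarrow> r < a + d \<Longrightarrow> V r > x"
    using right_gt[OF cad a va] by blast
  have "a + d \<le> \<tau>" unfolding \<tau>_def
    apply (rule cInf_greatest) using sA apply blast
    using d by (force simp: A_def not_less[symmetric])
  hence ta: "a < \<tau>" using d by auto
  have tb: "\<tau> \<le> b" using lowA[OF sA] s by auto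
  have below: "\<And>r. a \<le> r \<Longrightarrow> r < \<tau> \<Longrightarrow> V r > x"
  proof -
    fix r assume "a \<le> r" "r < \<tau>"
    hence "r \<notin> A" using lowA by force
    thus "V r > x" using \<open>a \<le> r\<close> \<open>r < \<tau>\<close> tb by (auto simp: A_def)
  qed
  have vt: "V \<tau> \<le> x"
  proof (rule ccontr)
    assume "\<not> V \<tau> \<le> x"
    then obtain d' where d': "d' > 0" "\<And>r. \<tau> \<le> r \<Longrightarrow> r < \<tau> + d' \<Longrightarrow> V r > x"
      using right_gt[OF cad, of \<tau> x] ta a by auto
    have "\<tau> + d' \<le> \<tau>"
      apply (subst (2) \<tau>_def) apply (rule cInf_greatest) using sA apply blast
      using d' below by (force simp: A_def not_less[symmetric])
    thus False using d' by auto
  qed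
  have t0: "\<tau> > 0" using ta a by auto
  have vl: "vleft V \<tau> \<ge> x"
  proof -
    have "eventually (\<lambda>r. V r \<ge> x) (at_left \<tau>)"
      unfolding eventually_at_left_field using ta below
      by (intro exI[of _ a]) (auto intro: less_imp_le)
    then show ?thesis using tendsto_lowerbound[OF vleft_tendsto[OF cad t0]] by auto
  qed
  have "\<tau> \<in> crossing_times V x"
  proof (cases "V \<tau> = x")
    case True thus ?thesis using t0 by (auto simp: crossing_times_def)
  next
    case False
    hence "V \<tau> < x" using vt by auto
    moreover have "vleft V \<tau> \<noteq> x" using NJ[OF t0] \<open>V \<tau> < x\<close> by auto
    ultimately show ?thesis using vl t0 by (auto simp: crossing_times_def)
  qed
  thus False using nc ta tb by auto
qed

end

lemma sgn_real_cases: "sgn (y::real) = 1 \<longleftrightarrow> y > 0" "sgn y = -1 \<longleftrightarrow> y < 0"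
  by (auto simp: sgn_if)

context
  fixes V :: "real \<Rightarrow> real"
  assumes cad: "cadlag V"
begin

lemma contrib:
  assumes NJ: "\<And>\<tau>. \<tau> > 0 \<Longrightarrow> V \<tau> \<noteq> vleft V \<tau> \<Longrightarrow> x \<noteq> V \<tau> \<and> x \<noteq> vleft V \<tau>"
    and t0: "0 \<le> r'" "r' < \<tau>" "\<tau> \<le> r"
    and tK: "\<tau> \<in> crossing_times V x" and vr: "V r \<noteq> x"
    and left: "\<And>s. r' \<le> s \<Longrightarrow> s < \<tau> \<Longrightarrow> (V s < x \<longleftrightarrow> V r' < x) \<and> V s \<noteq> x"
    and right: "\<And>s. \<tau> < s \<Longrightarrow> s \<le> r \<Longrightarrow> (V s < x \<longleftrightarrow> V r < x) \<and> V s \<noteq> x"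
    and tr: "V \<tau> \<noteq> x \<Longrightarrow> (V \<tau> < x \<longleftrightarrow> V r < x)"
  shows "(if incr_through V x \<tau> then 1 else 0) - (if decr_through V x \<tau> then 1 else 0)
       + (if vleft V \<tau> < x \<and> x < V \<tau> then 1 else 0) - (if V \<tau> < x \<and> x < vleft V \<tau> then 1 else 0)
       = (if x < V r then 1 else 0) - (if x < V r' then (1::int) else 0)"
proof -
  have tpos: "\<tau> > 0" using t0 by auto
  have vr': "V r' \<noteq> x" using left[of r'] t0 by auto
  show ?thesis
  proof (cases "V \<tau> = x")
    case True
    have vl: "vleft V \<tau> = V \<tau>" using NJ[OF tpos] True by metis
    have ic: "isCont V \<tau>" using cont_at[OF cad tpos vl] .
    have ic': "isCont (\<lambda>s. - V s) \<tau>" using ic by (intro continuous_intros)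
    have tr2: "\<tau> < r" using True vr t0 by (cases "\<tau> = r") auto
    define e where "e = min (\<tau> - r') (r - \<tau>)"
    have e: "e > 0" using t0 tr2 by (auto simp: e_def)
    have sides: "\<And>d. d > 0 \<Longrightarrow> (\<exists>s1 s2. s1 \<ge> 0 \<and> r' \<le> s1 \<and> s1 < \<tau> \<and> \<tau> - d < s1 \<and>
                   \<tau> < s2 \<and> s2 \<le> r \<and> s2 < \<tau> + d)"
    proof -
      fix d :: real assume d: "d > 0"
      show "\<exists>s1 s2. s1 \<ge> 0 \<and> r' \<le> s1 \<and> s1 < \<tau> \<and> \<tau> - d < s1 \<and> \<tau> < s2 \<and> s2 \<le> r \<and> s2 < \<tau> + d"
        apply (rule exI[of _ "\<tau> - min d (\<tau> - r') / 2"], rule exI[of _ "\<tau> + min d (r - \<tau>) / 2"])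
        using d t0 tr2 by (auto simp: min_def field_simps)
    qed
    have inc: "incr_through V x \<tau> \<longleftrightarrow> V r' < x \<and> x < V r"
    proof
      assume "incr_through V x \<tau>"
      then obtain d where d: "d > 0" "\<And>s. s \<ge> 0 \<Longrightarrow> 0 < \<bar>s - \<tau>\<bar> \<Longrightarrow> \<bar>s - \<tau>\<bar> < d \<Longrightarrow> sgn (V s - V \<tau>) = sgn (s - \<tau>)"
        unfolding incr_through_def by blast
      obtain s1 s2 where s: "s1 \<ge> 0" "r' \<le> s1" "s1 < \<tau>" "\<tau> - d < s1" "\<tau> < s2" "s2 \<le> r" "s2 < \<tau> + d"
        using sides[OF d(1)] by blast
      have "sgn (V s1 - V \<tau>) = -1" using d(2)[of s1] s by (auto simp: sgn_if)
      hence "V s1 < x" using True by (auto simp: sgn_if split: if_splits)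
      hence a: "V r' < x" using left[of s1] s by auto
      have "sgn (V s2 - V \<tau>) = 1" using d(2)[of s2] s t0 by (auto simp: sgn_if)
      hence "V s2 > x" using True by (auto simp: sgn_if split: if_splits)
      hence "x < V r" using right[of s2] s vr by auto
      with a show "V r' < x \<and> x < V r" by auto
    next
      assume h: "V r' < x \<and> x < V r"
      show "incr_through V x \<tau>" unfolding incr_through_def
      proof (intro conjI exI[of _ e])
        show "V \<tau> = x" by fact
        show "continuous (at \<tau> within {0..}) V" using ic continuous_at_imp_continuous_at_within by blast
        show "e > 0" by fact
        show "\<forall>s\<ge>0. 0 < \<bar>s - \<tau>\<bar> \<and> \<bar>s - \<tau>\<bar> < e \<longrightarrow> sgn (V s - V \<tau>) = sgn (s - \<tau>)"
        proof (intro allI impI)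
          fix s :: real assume "0 \<le> s" and hs: "0 < \<bar>s - \<tau>\<bar> \<and> \<bar>s - \<tau>\<bar> < e"
          show "sgn (V s - V \<tau>) = sgn (s - \<tau>)"
          proof (cases "s < \<tau>")
            case True
            hence "r' \<le> s" using hs by (auto simp: e_def)
            hence "V s < x" using left[of s] True h by auto
            thus ?thesis using True \<open>V \<tau> = x\<close> by (simp add: sgn_if)
          next
            case False
            hence "\<tau> < s" "s \<le> r" using hs by (auto simp: e_def)
            hence "V s > x" using right[of s] h by auto
            thus ?thesis using \<open>\<tau> < s\<close> \<open>V \<tau> = x\<close> by (simp add: sgn_if)
          qed
        qed
      qed
    qed
    have dec: "decr_through V x \<tau> \<longleftrightarrow> V r' > x \<and> x > V r"
    proof
      assume "decr_through V x \<tau>"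
      then obtain d where d: "d > 0" "\<And>s. s \<ge> 0 \<Longrightarrow> 0 < \<bar>s - \<tau>\<bar> \<Longrightarrow> \<bar>s - \<tau>\<bar> < d \<Longrightarrow> sgn (- V s - - V \<tau>) = sgn (s - \<tau>)"
        unfolding decr_through_def incr_through_def by blast
      obtain s1 s2 where s: "s1 \<ge> 0" "r' \<le> s1" "s1 < \<tau>" "\<tau> - d < s1" "\<tau> < s2" "s2 \<le> r" "s2 < \<tau> + d"
        using sides[OF d(1)] by blast
      have "sgn (- V s1 - - V \<tau>) = -1" using d(2)[of s1] s by (auto simp: sgn_if)
      hence "V s1 > x" using True by (auto simp: sgn_if split: if_splits)
      hence a: "V r' > x" using left[of s1] s vr' by auto
      have "sgn (- V s2 - - V \<tau>) = 1" using d(2)[of s2] s t0 by (auto simp: sgn_if)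
      hence "V s2 < x" using True by (auto simp: sgn_if split: if_splits)
      hence "x > V r" using right[of s2] s vr by auto
      with a show "V r' > x \<and> x > V r" by auto
    next
      assume h: "V r' > x \<and> x > V r"
      show "decr_through V x \<tau>" unfolding decr_through_def incr_through_def
      proof (intro conjI exI[of _ e])
        show "- V \<tau> = - x" using True by simp
        show "continuous (at \<tau> within {0..}) (\<lambda>s. - V s)" using ic' continuous_at_imp_continuous_at_within by blast
        show "e > 0" by fact
        show "\<forall>s\<ge>0. 0 < \<bar>s - \<tau>\<bar> \<and> \<bar>s - \<tau>\<bar> < e \<longrightarrow> sgn (- V s - - V \<tau>) = sgn (s - \<tau>)"
        proof (intro allI impI)
          fix s :: real assume "0 \<le> s" and hs: "0 < \<bar>s - \<tau>\<bar> \<and> \<bar>s - \<tau>\<bar> < e"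
          show "sgn (- V s - - V \<tau>) = sgn (s - \<tau>)"
          proof (cases "s < \<tau>")
            case True
            hence "r' \<le> s" using hs by (auto simp: e_def)
            hence "V s > x" using left[of s] True h vr' by auto
            thus ?thesis using True \<open>V \<tau> = x\<close> by (simp add: sgn_if)
          next
            case False
            hence "\<tau> < s" "s \<le> r" using hs by (auto simp: e_def)
            hence "V s < x" using right[of s] h by auto
            thus ?thesis using \<open>\<tau> < s\<close> \<open>V \<tau> = x\<close> by (simp add: sgn_if)
          qed
        qed
      qed
    qed
    show ?thesis using inc dec True vr vr' by auto
  next
    case False
    have ni: "\<not> incr_through V x \<tau>" using False by (auto simp: incr_through_def)
    have nd: "\<not> decr_through V x \<tau>" using False by (auto simp: decr_through_def incr_through_def)
    have cr: "(vleft V \<tau> < x \<and> x < V \<tau>) \<or> (V \<tau> < x \<and> x < vleft V \<tau>)"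
      using tK False by (auto simp: crossing_times_def)
    show ?thesis
    proof (cases "vleft V \<tau> < x \<and> x < V \<tau>")
      case True
      then obtain d where d: "d > 0" "\<And>s. \<tau> - d < s \<Longrightarrow> s < \<tau> \<Longrightarrow> V s < x"
        using left_lt[OF cad tpos] by blast
      define s where "s = max r' (\<tau> - d/2)"
      have "r' \<le> s" "s < \<tau>" "\<tau> - d < s" using d t0 by (auto simp: s_def)
      hence "V r' < x" using left[of s] d(2)[of s] by auto
      moreover have "x < V r" using tr True vr by auto
      ultimately show ?thesis using ni nd True by auto
    next
      case False2: False
      hence T: "V \<tau> < x \<and> x < vleft V \<tau>" using cr by auto
      then obtain d where d: "d > 0" "\<And>s. \<tau> - d < s \<Longrightarrow> s < \<tau> \<Longrightarrow> V s > x"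
        using left_gt[OF cad tpos] by blast
      define s where "s = max r' (\<tau> - d/2)"
      have "r' \<le> s" "s < \<tau>" "\<tau> - d < s" using d t0 by (auto simp: s_def)
      hence "V r' > x" using left[of s] d(2)[of s] vr' by auto
      moreover have "V r < x" using tr T vr by auto
      ultimately show ?thesis using ni nd T by auto
    qed
  qed
qed

end

lemma card_split:
  fixes K :: "real set"
  assumes fin: "finite (K \<inter> {0<..r})" and PK: "\<And>s. s > 0 \<Longrightarrow> P s \<Longrightarrow> s \<in> K"
    and o: "0 \<le> r'" "r' < \<tau>" "\<tau> \<le> r"
    and only: "\<And>s. s \<in> K \<Longrightarrow> r' < s \<Longrightarrow> s \<le> r \<Longrightarrow> s = \<tau>"
  shows "card {s\<in>{0<..r}. P s} = card {s\<in>{0<..r'}. P s} + (if P \<tau> then 1 else 0)"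
proof -
  have eq: "{s\<in>{0<..r}. P s} = {s\<in>{0<..r'}. P s} \<union> {s. s = \<tau> \<and> P \<tau>}"
    using o only PK by force
  have f1: "finite {s\<in>{0<..r'}. P s}"
    by (rule finite_subset[OF _ fin]) (use PK o in auto)
  have "card {s\<in>{0<..r}. P s} = card {s\<in>{0<..r'}. P s} + card {s. s = \<tau> \<and> P \<tau>}"
    unfolding eq by (rule card_Un_disjoint) (use f1 o in auto)
  thus ?thesis by auto
qed

definition Gc :: "(real \<Rightarrow> real) \<Rightarrow> real \<Rightarrow> real \<Rightarrow> int" where
  "Gc V x r = int (card {s\<in>{0<..r}. incr_through V x s}) - int (card {s\<in>{0<..r}. decr_through V x s})
     + int (card {s\<in>{0<..r}. vleft V s < x \<and> x < V s}) - int (card {s\<in>{0<..r}. V s < x \<and> x < vleft V s})"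

context
  fixes V :: "real \<Rightarrow> real"
  assumes cad: "cadlag V"
begin

lemma sweep:
  assumes NJ: "\<And>\<tau>. \<tau> > 0 \<Longrightarrow> V \<tau> \<noteq> vleft V \<tau> \<Longrightarrow> x \<noteq> V \<tau> \<and> x \<noteq> vleft V \<tau>"
    and fin: "finite (crossing_times V x \<inter> {0..t})" and x0: "V 0 \<noteq> x"
  shows "0 \<le> r \<Longrightarrow> r \<le> t \<Longrightarrow> V r \<noteq> x \<Longrightarrow>
    Gc V x r = (if x < V r then 1 else 0) - (if x < V 0 then 1 else 0)"
proof -
  define K where "K = crossing_times V x"
  have NJ': "\<And>\<tau>. \<tau> > 0 \<Longrightarrow> V \<tau> \<noteq> vleft V \<tau> \<Longrightarrow> x \<noteq> vleft V \<tau>" using NJ by blast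
  have finr: "\<And>r. r \<le> t \<Longrightarrow> finite (K \<inter> {0<..r})"
    by (rule finite_subset[OF _ fin]) (auto simp: K_def)
  have memK: "\<And>s. s > 0 \<Longrightarrow> V s = x \<Longrightarrow> s \<in> K" by (auto simp: K_def crossing_times_def)
  have PK: "\<And>s. s > 0 \<Longrightarrow> incr_through V x s \<Longrightarrow> s \<in> K"
           "\<And>s. s > 0 \<Longrightarrow> decr_through V x s \<Longrightarrow> s \<in> K"
           "\<And>s. s > 0 \<Longrightarrow> vleft V s < x \<and> x < V s \<Longrightarrow> s \<in> K"
           "\<And>s. s > 0 \<Longrightarrow> V s < x \<and> x < vleft V s \<Longrightarrow> s \<in> K"
    by (auto simp: K_def crossing_times_def incr_through_def decr_through_def)
  have propg: "\<And>a b. 0 \<le> a \<Longrightarrow> a \<le> b \<Longrightarrow> V a \<noteq> x \<Longrightarrow> (\<And>s. a < s \<Longrightarrow> s \<le> b \<Longrightarrow> s \<notin> K) \<Longrightarrow>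
      (V b < x \<longleftrightarrow> V a < x) \<and> V b \<noteq> x"
  proof -
    fix a b assume h: "0 \<le> a" "a \<le> b" "V a \<noteq> x" "\<And>s. a < s \<Longrightarrow> s \<le> b \<Longrightarrow> s \<notin> K"
    show "(V b < x \<longleftrightarrow> V a < x) \<and> V b \<noteq> x"
    proof (cases "V a < x")
      case True
      have "V b < x" by (rule NC_lt[OF cad NJ' h(1) True _ h(2) order_refl]) (use h(4) in \<open>auto simp: K_def\<close>)
      thus ?thesis using True by auto
    next
      case False
      hence "V a > x" using h by auto
      have "V b > x" by (rule NC_gt[OF cad NJ' h(1) \<open>V a > x\<close> _ h(2) order_refl]) (use h(4) in \<open>auto simp: K_def\<close>)
      thus ?thesis using False by auto
    qed
  qed
  have main: "\<forall>r. card (K \<inter> {0<..r}) = n \<longrightarrow> 0 \<le> r \<longrightarrow> r \<le> t \<longrightarrow> V r \<noteq> x \<longrightarrow>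
    Gc V x r = (if x < V r then 1 else 0) - (if x < V 0 then 1 else 0)" for n
  proof (induction n rule: less_induct)
    case (less n)
    show ?case
    proof (intro allI impI)
      fix r assume cr: "card (K \<inter> {0<..r}) = n" and r: "0 \<le> r" "r \<le> t" "V r \<noteq> x"
      show "Gc V x r = (if x < V r then 1 else 0) - (if x < V 0 then 1 else 0)"
      proof (cases "K \<inter> {0<..r} = {}")
        case True
        have e: "{s\<in>{0<..r}. P s} = {}" if "\<And>s. s > 0 \<Longrightarrow> P s \<Longrightarrow> s \<in> K" for P
          using True that by (auto simp: disjoint_iff)
        have nK: "\<And>s. 0 < s \<Longrightarrow> s \<le> r \<Longrightarrow> s \<notin> K" using True by auto
        have "(V r < x \<longleftrightarrow> V 0 < x)" using propg[of 0 r, OF _ _ x0 nK] r by auto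
        moreover have e1: "{s\<in>{0<..r}. incr_through V x s} = {}" by (rule e) (rule PK(1))
        moreover have e2: "{s\<in>{0<..r}. decr_through V x s} = {}" by (rule e) (rule PK(2))
        moreover have e3: "{s\<in>{0<..r}. vleft V s < x \<and> x < V s} = {}" by (rule e) (rule PK(3))
        moreover have e4: "{s\<in>{0<..r}. V s < x \<and> x < vleft V s} = {}" by (rule e) (rule PK(4))
        ultimately show ?thesis unfolding Gc_def using r x0 by (simp only: card.empty) auto
      next
        case False
        define \<tau> where "\<tau> = Max (K \<inter> {0<..r})"
        have fr: "finite (K \<inter> {0<..r})" using finr r by auto
        have tK: "\<tau> \<in> K \<inter> {0<..r}" unfolding \<tau>_def using fr False by (rule Max_in)
        have tmax: "\<And>s. s \<in> K \<inter> {0<..r} \<Longrightarrow> s \<le> \<tau>" unfolding \<tau>_def using fr by simp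
        define K' where "K' = K \<inter> {0<..<\<tau>}"
        have fK': "finite K'" unfolding K'_def by (rule finite_subset[OF _ fr]) (use tK in auto)
        define c where "c = (if K' = {} then 0 else Max K')"
        have c0: "0 \<le> c \<and> c < \<tau>"
        proof (cases "K' = {}")
          case True thus ?thesis using tK by (auto simp: c_def)
        next
          case False
          have "Max K' \<in> K'" using fK' False by (rule Max_in)
          thus ?thesis using False by (auto simp: c_def K'_def)
        qed
        hence c: "0 \<le> c" "c < \<tau>" by auto
        have noK: "\<And>s. s \<in> K \<Longrightarrow> c < s \<Longrightarrow> s < \<tau> \<Longrightarrow> False"
        proof -
          fix s assume s: "s \<in> K" "c < s" "s < \<tau>"
          hence "s > 0" using c by auto
          hence "s \<in> K'" using s by (auto simp: K'_def)
          hence "s \<le> c" using fK' by (auto simp: c_def)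
          thus False using s by auto
        qed
        define r' where "r' = (c + \<tau>) / 2"
        have r': "c < r'" "r' < \<tau>" "0 < r'" using c by (auto simp: r'_def)
        have r'K: "r' \<notin> K" using noK r' by blast
        have vr': "V r' \<noteq> x" using memK r'K r' by auto
        have only: "\<And>s. s \<in> K \<Longrightarrow> r' < s \<Longrightarrow> s \<le> r \<Longrightarrow> s = \<tau>"
          using tmax noK r' by force
        have sub: "K \<inter> {0<..r'} \<subset> K \<inter> {0<..r}"
        proof
          show "K \<inter> {0<..r'} \<subseteq> K \<inter> {0<..r}" using tK r' by auto
          show "K \<inter> {0<..r'} \<noteq> K \<inter> {0<..r}" 
          proof
            assume "K \<inter> {0<..r'} = K \<inter> {0<..r}"
            hence "\<tau> \<in> K \<inter> {0<..r'}" using tK by simp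
            thus False using r' by simp
          qed
        qed
        have "card (K \<inter> {0<..r'}) < n" using psubset_card_mono[OF fr sub] cr by simp
        hence IH: "Gc V x r' = (if x < V r' then 1 else 0) - (if x < V 0 then 1 else 0)"
          using less[of "card (K \<inter> {0<..r'})"] r' tK r vr' by auto
        have left: "\<And>s. r' \<le> s \<Longrightarrow> s < \<tau> \<Longrightarrow> (V s < x \<longleftrightarrow> V r' < x) \<and> V s \<noteq> x"
        proof -
          fix s assume s: "r' \<le> s" "s < \<tau>"
          have nK: "\<And>q. r' < q \<Longrightarrow> q \<le> s \<Longrightarrow> q \<notin> K" using noK r' s by fastforce
          show "(V s < x \<longleftrightarrow> V r' < x) \<and> V s \<noteq> x" using propg[of r' s, OF _ s(1) vr' nK] r' by auto
        qed
        have right: "\<And>s. \<tau> < s \<Longrightarrow> s \<le> r \<Longrightarrow> (V s < x \<longleftrightarrow> V r < x) \<and> V s \<noteq> x"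
        proof -
          fix s assume s: "\<tau> < s" "s \<le> r"
          have sK: "\<And>q. \<tau> < q \<Longrightarrow> q \<le> r \<Longrightarrow> q \<notin> K"
          proof
            fix q assume "\<tau> < q" "q \<le> r" "q \<in> K"
            hence "q \<le> \<tau>" using tmax tK by auto
            thus False using \<open>\<tau> < q\<close> by simp
          qed
          have "V s \<noteq> x" using memK sK[OF s] s tK by auto
          thus "(V s < x \<longleftrightarrow> V r < x) \<and> V s \<noteq> x" using propg[of s r, OF _ s(2) _ sK] s tK by auto
        qed
        have tr: "V \<tau> \<noteq> x \<Longrightarrow> (V \<tau> < x \<longleftrightarrow> V r < x)"
        proof -
          assume "V \<tau> \<noteq> x"
          have sK: "\<And>q. \<tau> < q \<Longrightarrow> q \<le> r \<Longrightarrow> q \<notin> K"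
          proof
            fix q assume "\<tau> < q" "q \<le> r" "q \<in> K"
            hence "q \<le> \<tau>" using tmax tK by auto
            thus False using \<open>\<tau> < q\<close> by simp
          qed
          show ?thesis using propg[of \<tau> r, OF _ _ \<open>V \<tau> \<noteq> x\<close> sK] tK by auto
        qed
        have ct: "\<tau> \<in> crossing_times V x" using tK by (simp add: K_def)
        have C: "(if incr_through V x \<tau> then 1 else 0) - (if decr_through V x \<tau> then 1 else 0)
           + (if vleft V \<tau> < x \<and> x < V \<tau> then 1 else 0) - (if V \<tau> < x \<and> x < vleft V \<tau> then 1 else 0)
           = (if x < V r then 1 else 0) - (if x < V r' then (1::int) else 0)"
          by (rule contrib[OF cad NJ _ _ _ ct r(3) left right tr]) (use r' tK in auto)
        note cs = card_split[OF fr, of _ r' \<tau>, OF _ _ _ _ only]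
        have o: "0 \<le> r'" "r' < \<tau>" "\<tau> \<le> r" using r' tK by auto
        have "Gc V x r = Gc V x r' + ((if incr_through V x \<tau> then 1 else 0) - (if decr_through V x \<tau> then 1 else 0)
           + (if vleft V \<tau> < x \<and> x < V \<tau> then 1 else 0) - (if V \<tau> < x \<and> x < vleft V \<tau> then 1 else 0))"
          using cs[OF PK(1) o] cs[OF PK(2) o] cs[OF PK(3) o] cs[OF PK(4) o] unfolding Gc_def
          by (simp del: Collect_mem_eq)
        thus ?thesis unfolding C IH by simp
      qed
    qed
  qed
  assume "0 \<le> r" "r \<le> t" "V r \<noteq> x"
  thus ?thesis using main by blast
qed

end

context
  fixes V :: "real \<Rightarrow> real"
  assumes cad: "cadlag V" and fv: "finite_variation V"
begin

lemma bv_bound: "T \<ge> 0 \<Longrightarrow> \<exists>B. \<forall>n p. 0 \<le> p 0 \<and> p n \<le> T \<and> (\<forall>i<n. p i \<le> p (Suc i)) \<longrightarrow>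
   (\<Sum>i<n. \<bar>V (p (Suc i)) - V (p i)\<bar>) \<le> B"
  using fv unfolding finite_variation_def bounded_variation_on_def by blast

lemma V_bounded: "T \<ge> 0 \<Longrightarrow> \<exists>M. \<forall>s. 0 \<le> s \<longrightarrow> s \<le> T \<longrightarrow> \<bar>V s\<bar> \<le> M"
proof -
  assume T: "T \<ge> 0"
  obtain B where B: "\<And>n p. 0 \<le> p 0 \<Longrightarrow> p n \<le> T \<Longrightarrow> (\<forall>i<n. p i \<le> p (Suc i)) \<Longrightarrow>
   (\<Sum>i<n. \<bar>V (p (Suc i)) - V (p i)\<bar>) \<le> B" using bv_bound[OF T] by blast
  show ?thesis
  proof (intro exI[of _ "\<bar>V 0\<bar> + B"] allI impI)
    fix s :: real assume s: "0 \<le> s" "s \<le> T"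
    have "(\<Sum>i<1. \<bar>V ((\<lambda>i. if i = 0 then 0 else s) (Suc i)) - V ((\<lambda>i. if i = 0 then 0 else s) i)\<bar>) \<le> B"
      by (rule B) (use s in auto)
    thus "\<bar>V s\<bar> \<le> \<bar>V 0\<bar> + B" by simp
  qed
qed

lemma jump_approx:
  assumes "finite F"
  shows "\<forall>b \<epsilon>. b \<ge> 0 \<longrightarrow> F \<subseteq> {0<..b} \<longrightarrow> \<epsilon> > 0 \<longrightarrow> (\<exists>n p. 0 \<le> p 0 \<and> p n \<le> b \<and> (\<forall>i<n. p i \<le> p (Suc i)) \<and>
     (\<Sum>s\<in>F. \<bar>V s - vleft V s\<bar>) - \<epsilon> \<le> (\<Sum>i<n. \<bar>V (p (Suc i)) - V (p i)\<bar>))"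
  using assms
proof (induction rule: finite_linorder_max_induct)
  case empty
  show ?case
  proof (intro allI impI)
    fix b \<epsilon> :: real assume "b \<ge> 0" "{} \<subseteq> {0<..b}" "\<epsilon> > 0"
    thus "\<exists>n p. 0 \<le> p 0 \<and> p n \<le> b \<and> (\<forall>i<n. p i \<le> p (Suc i)) \<and>
     (\<Sum>s\<in>{}. \<bar>V s - vleft V s\<bar>) - \<epsilon> \<le> (\<Sum>i<n. \<bar>V (p (Suc i)) - V (p i)\<bar>)"
      by (intro exI[of _ 0] exI[of _ "\<lambda>_. 0"]) auto
  qed
next
  case (insert m A)
  show ?case
  proof (intro allI impI)
    fix b \<epsilon> :: real assume b: "b \<ge> 0" "insert m A \<subseteq> {0<..b}" "\<epsilon> > 0"
    have m: "0 < m" "m \<le> b" using b by auto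
    have "eventually (\<lambda>r. dist (V r) (vleft V m) < \<epsilon>/2) (at_left m)"
      using tendstoD[OF vleft_tendsto[OF cad m(1)], of "\<epsilon>/2"] b by auto
    then obtain d where d: "d < m" "\<And>r. d < r \<Longrightarrow> r < m \<Longrightarrow> \<bar>V r - vleft V m\<bar> < \<epsilon>/2"
      unfolding eventually_at_left_field dist_real_def by blast
    define c where "c = (if A = {} then 0 else Max A)"
    have c0: "0 \<le> c \<and> c < m \<and> (\<forall>a\<in>A. a \<le> c)"
    proof (cases "A = {}")
      case True thus ?thesis using m by (auto simp: c_def)
    next
      case False
      have MA: "Max A \<in> A" using insert(1) False by (rule Max_in)
      hence "Max A > 0" "Max A < m" using b(2) insert(2) by auto
      moreover have "\<forall>a\<in>A. a \<le> Max A" using insert(1) by simp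
      ultimately show ?thesis using False by (simp add: c_def)
    qed
    hence c: "0 \<le> c" "c < m" "\<And>a. a \<in> A \<Longrightarrow> a \<le> c" by auto
    define a' where "a' = max c ((d + m)/2)"
    have a': "0 \<le> a'" "a' < m" "d < a'" "A \<subseteq> {0<..a'}" using c d b by (auto simp: a'_def subset_eq le_max_iff_disj less_max_iff_disj)
    obtain n p where np: "0 \<le> p 0" "p n \<le> a'" "\<forall>i<n. p i \<le> p (Suc i)"
      "(\<Sum>s\<in>A. \<bar>V s - vleft V s\<bar>) - \<epsilon>/2 \<le> (\<Sum>i<n. \<bar>V (p (Suc i)) - V (p i)\<bar>)"
      using insert(3)[rule_format, of a' "\<epsilon>/2"] a' b by auto
    define q where "q i = (if i \<le> n then p i else if i = Suc n then a' else m)" for i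
    have qsum: "(\<Sum>i<Suc (Suc n). \<bar>V (q (Suc i)) - V (q i)\<bar>) =
       (\<Sum>i<n. \<bar>V (p (Suc i)) - V (p i)\<bar>) + \<bar>V a' - V (p n)\<bar> + \<bar>V m - V a'\<bar>"
    proof -
      have "(\<Sum>i<n. \<bar>V (q (Suc i)) - V (q i)\<bar>) = (\<Sum>i<n. \<bar>V (p (Suc i)) - V (p i)\<bar>)"
        by (rule sum.cong) (auto simp: q_def)
      thus ?thesis by (simp add: q_def)
    qed
    have jm: "\<bar>V m - vleft V m\<bar> \<le> \<bar>V m - V a'\<bar> + \<epsilon>/2"
    proof -
      have "\<bar>V a' - vleft V m\<bar> < \<epsilon>/2" using d(2)[of a'] a' by auto
      moreover have "\<bar>V m - vleft V m\<bar> \<le> \<bar>V m - V a'\<bar> + \<bar>V a' - vleft V m\<bar>" by arith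
      ultimately show ?thesis by linarith
    qed
    have sA: "(\<Sum>s\<in>insert m A. \<bar>V s - vleft V s\<bar>) = \<bar>V m - vleft V m\<bar> + (\<Sum>s\<in>A. \<bar>V s - vleft V s\<bar>)"
      using insert(1,2) by (subst sum.insert) auto
    show "\<exists>n p. 0 \<le> p 0 \<and> p n \<le> b \<and> (\<forall>i<n. p i \<le> p (Suc i)) \<and>
     (\<Sum>s\<in>insert m A. \<bar>V s - vleft V s\<bar>) - \<epsilon> \<le> (\<Sum>i<n. \<bar>V (p (Suc i)) - V (p i)\<bar>)"
    proof (intro exI[of _ "Suc (Suc n)"] exI[of _ q] conjI)
      show "0 \<le> q 0" using np by (simp add: q_def)
      show "q (Suc (Suc n)) \<le> b" using m by (simp add: q_def)
      show "\<forall>i<Suc (Suc n). q i \<le> q (Suc i)"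
      proof (intro allI impI)
        fix i assume "i < Suc (Suc n)"
        hence "i < n \<or> i = n \<or> i = Suc n" by auto
        thus "q i \<le> q (Suc i)" using np a' by (auto simp: q_def)
      qed
      show "(\<Sum>s\<in>insert m A. \<bar>V s - vleft V s\<bar>) - \<epsilon> \<le> (\<Sum>i<Suc (Suc n). \<bar>V (q (Suc i)) - V (q i)\<bar>)"
        unfolding qsum sA using jm np(4) by linarith
    qed
  qed
qed

lemma jump_bound:
  assumes T: "T \<ge> 0" and B: "\<And>n p. 0 \<le> p 0 \<Longrightarrow> p n \<le> T \<Longrightarrow> (\<forall>i<n. p i \<le> p (Suc i)) \<Longrightarrow>
   (\<Sum>i<n. \<bar>V (p (Suc i)) - V (p i)\<bar>) \<le> B"
    and F: "finite F" "F \<subseteq> {0<..T}"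
  shows "(\<Sum>s\<in>F. \<bar>V s - vleft V s\<bar>) \<le> B"
proof (rule ccontr)
  assume "\<not> ?thesis"
  define e where "e = ((\<Sum>s\<in>F. \<bar>V s - vleft V s\<bar>) - B) / 2"
  have e: "e > 0" using \<open>\<not> (\<Sum>s\<in>F. \<bar>V s - vleft V s\<bar>) \<le> B\<close> by (simp add: e_def)
  obtain n p where "0 \<le> p 0" "p n \<le> T" "\<forall>i<n. p i \<le> p (Suc i)"
     "(\<Sum>s\<in>F. \<bar>V s - vleft V s\<bar>) - e \<le> (\<Sum>i<n. \<bar>V (p (Suc i)) - V (p i)\<bar>)"
    using jump_approx[OF F(1), rule_format, OF T F(2) e] by blast
  with B[of p n] have "(\<Sum>s\<in>F. \<bar>V s - vleft V s\<bar>) - e \<le> B" by auto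
  thus False using e unfolding e_def by (simp add: field_simps)
qed

lemma jump_summable: "T \<ge> 0 \<Longrightarrow> (\<lambda>s. \<bar>V s - vleft V s\<bar>) summable_on {0<..T}"
proof -
  assume T: "T \<ge> 0"
  obtain B where B: "\<And>n p. 0 \<le> p 0 \<Longrightarrow> p n \<le> T \<Longrightarrow> (\<forall>i<n. p i \<le> p (Suc i)) \<Longrightarrow>
   (\<Sum>i<n. \<bar>V (p (Suc i)) - V (p i)\<bar>) \<le> B" using bv_bound[OF T] by blast
  show ?thesis
    by (rule nonneg_bdd_above_summable_on) (auto intro!: bdd_aboveI[of _ B] jump_bound[OF T B])
qed

lemma jumps_countable: "countable {s. s > 0 \<and> V s \<noteq> vleft V s}"
proof -
  have c: "countable {s\<in>{0<..real n}. V s - vleft V s \<noteq> 0}" for n :: nat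
    by (rule abs_summable_countable) (use jump_summable[of "real n"] in simp)
  have "{s. s > 0 \<and> V s \<noteq> vleft V s} \<subseteq> (\<Union>n. {s\<in>{0<..real n}. V s - vleft V s \<noteq> 0})"
  proof
    fix s assume s: "s \<in> {s. s > 0 \<and> V s \<noteq> vleft V s}"
    obtain n :: nat where "s \<le> real n" using real_arch_simple by blast
    thus "s \<in> (\<Union>n. {s\<in>{0<..real n}. V s - vleft V s \<noteq> 0})" using s by auto
  qed
  thus ?thesis using c by (meson countable_UN countable_subset UNIV_I countableI_type)
qed

end

definition extval :: "(real \<Rightarrow> real) \<Rightarrow> real set" where
  "extval V = {V \<tau> | \<tau>. \<tau> > 0 \<and> (\<exists>d>0. (\<forall>s\<ge>0. \<bar>s - \<tau>\<bar> < d \<longrightarrow> V \<tau> \<le> V s) \<or> (\<forall>s\<ge>0. \<bar>s - \<tau>\<bar> < d \<longrightarrow> V s \<le> V \<tau>))}"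

lemma extval_countable: "countable (extval V)"
proof -
  define S where "S = (\<lambda>(p::real,q::real). {s. 0 \<le> s \<and> p < s \<and> s < q})"
  have "extval V \<subseteq> (\<lambda>pq. Inf (V ` S pq)) ` (\<rat> \<times> \<rat>) \<union> (\<lambda>pq. Sup (V ` S pq)) ` (\<rat> \<times> \<rat>)"
  proof
    fix y assume "y \<in> extval V"
    then obtain \<tau> d where t: "y = V \<tau>" "\<tau> > 0" "d > 0"
      "(\<forall>s\<ge>0. \<bar>s - \<tau>\<bar> < d \<longrightarrow> V \<tau> \<le> V s) \<or> (\<forall>s\<ge>0. \<bar>s - \<tau>\<bar> < d \<longrightarrow> V s \<le> V \<tau>)"
      unfolding extval_def by blast
    obtain p where p: "p \<in> \<rat>" "\<tau> - d < p" "p < \<tau>" using Rats_dense_in_real[of "\<tau> - d" \<tau>] t by auto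
    obtain q where q: "q \<in> \<rat>" "\<tau> < q" "q < \<tau> + d" using Rats_dense_in_real[of \<tau> "\<tau> + d"] t by auto
    have tS: "\<tau> \<in> S (p, q)" using p q t by (auto simp: S_def)
    have inS: "\<And>s. s \<in> S (p, q) \<Longrightarrow> s \<ge> 0 \<and> \<bar>s - \<tau>\<bar> < d" using p q by (auto simp: S_def)
    show "y \<in> (\<lambda>pq. Inf (V ` S pq)) ` (\<rat> \<times> \<rat>) \<union> (\<lambda>pq. Sup (V ` S pq)) ` (\<rat> \<times> \<rat>)"
    proof (cases "\<forall>s\<ge>0. \<bar>s - \<tau>\<bar> < d \<longrightarrow> V \<tau> \<le> V s")
      case True
      have "Inf (V ` S (p, q)) = V \<tau>"
        by (rule cInf_eq_minimum) (use tS inS True in auto)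
      thus ?thesis using p q t by (intro UnI1) (auto intro!: image_eqI[of _ _ "(p,q)"])
    next
      case False
      hence F: "\<forall>s\<ge>0. \<bar>s - \<tau>\<bar> < d \<longrightarrow> V s \<le> V \<tau>" using t by auto
      have "Sup (V ` S (p, q)) = V \<tau>"
        by (rule cSup_eq_maximum) (use tS inS F in auto)
      thus ?thesis using p q t by (intro UnI2) (auto intro!: image_eqI[of _ _ "(p,q)"])
    qed
  qed
  moreover have "countable (\<rat> \<times> \<rat> :: (real \<times> real) set)" by (intro countable_SIGMA countable_rat)
  ultimately show ?thesis by (meson countable_Un countable_image countable_subset)
qed

lemma disc_cross:
  fixes u :: "nat \<Rightarrow> real"
  shows "a < b \<Longrightarrow> (u a < x \<and> x \<le> u b) \<or> (u b < x \<and> x \<le> u a) \<Longrightarrow>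
    \<exists>i. a \<le> i \<and> i < b \<and> min (u i) (u (Suc i)) < x \<and> x \<le> max (u i) (u (Suc i))"
proof (induction b)
  case 0 thus ?case by simp
next
  case (Suc b)
  show ?case
  proof (cases "a = b")
    case True thus ?thesis using Suc by (intro exI[of _ a]) auto
  next
    case False
    hence ab: "a < b" using Suc by auto
    show ?thesis
    proof (cases "(u a < x \<and> x \<le> u b) \<or> (u b < x \<and> x \<le> u a)")
      case True
      then obtain i where "a \<le> i \<and> i < b \<and> min (u i) (u (Suc i)) < x \<and> x \<le> max (u i) (u (Suc i))"
        using Suc.IH ab by blast
      thus ?thesis by (intro exI[of _ i]) auto
    next
      case False
      thus ?thesis using Suc.prems ab by (intro exI[of _ b]) auto
    qed
  qed
qed

context
  fixes V :: "real \<Rightarrow> real"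
  assumes cad: "cadlag V" and fv: "finite_variation V"
begin

lemma two_sided:
  assumes x: "x \<notin> extval V" and t: "\<tau> \<in> crossing_times V x" and e: "\<epsilon> > 0"
  shows "(\<exists>s\<ge>0. \<bar>s - \<tau>\<bar> < \<epsilon> \<and> V s > x) \<and> (\<exists>s\<ge>0. \<bar>s - \<tau>\<bar> < \<epsilon> \<and> V s < x)"
proof -
  have tp: "\<tau> > 0" using t by (auto simp: crossing_times_def)
  show ?thesis
  proof (cases "V \<tau> = x")
    case True
    have "\<not> (\<forall>s\<ge>0. \<bar>s - \<tau>\<bar> < \<epsilon> \<longrightarrow> V \<tau> \<le> V s)" "\<not> (\<forall>s\<ge>0. \<bar>s - \<tau>\<bar> < \<epsilon> \<longrightarrow> V s \<le> V \<tau>)"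
      using x True tp e unfolding extval_def by blast+
    thus ?thesis using True by (auto simp: not_le)
  next
    case False
    have "(vleft V \<tau> < x \<and> x < V \<tau>) \<or> (V \<tau> < x \<and> x < vleft V \<tau>)"
      using t False by (auto simp: crossing_times_def)
    thus ?thesis
    proof
      assume h: "vleft V \<tau> < x \<and> x < V \<tau>"
      obtain d where d: "d > 0" "\<And>r. \<tau> - d < r \<Longrightarrow> r < \<tau> \<Longrightarrow> V r < x" using left_lt[OF cad tp] h by blast
      define s where "s = \<tau> - min (min d \<epsilon>) \<tau> / 2"
      have "s \<ge> 0" "\<bar>s - \<tau>\<bar> < \<epsilon>" "\<tau> - d < s" "s < \<tau>" using d e tp by (auto simp: s_def min_def)
      thus ?thesis using d(2)[of s] h e tp by (intro conjI exI[of _ \<tau>] exI[of _ s]) auto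
    next
      assume h: "V \<tau> < x \<and> x < vleft V \<tau>"
      obtain d where d: "d > 0" "\<And>r. \<tau> - d < r \<Longrightarrow> r < \<tau> \<Longrightarrow> V r > x" using left_gt[OF cad tp] h by blast
      define s where "s = \<tau> - min (min d \<epsilon>) \<tau> / 2"
      have "s \<ge> 0" "\<bar>s - \<tau>\<bar> < \<epsilon>" "\<tau> - d < s" "s < \<tau>" using d e tp by (auto simp: s_def min_def)
      thus ?thesis using d(2)[of s] h e tp by (intro conjI exI[of _ \<tau>] exI[of _ s]) auto
    qed
  qed
qed

end

definition grid :: "real \<Rightarrow> nat \<Rightarrow> nat \<Rightarrow> real" where
  "grid c n k = c * real k / 2 ^ n"

definition Iv :: "(real \<Rightarrow> real) \<Rightarrow> real \<Rightarrow> nat \<Rightarrow> nat \<Rightarrow> real set" where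
  "Iv V c n k = {min (V (grid c n k)) (V (grid c n (Suc k))) <.. max (V (grid c n k)) (V (grid c n (Suc k)))}"

definition Nn :: "(real \<Rightarrow> real) \<Rightarrow> real \<Rightarrow> nat \<Rightarrow> real \<Rightarrow> ennreal" where
  "Nn V c n x = (\<Sum>k<2^n. indicator (Iv V c n k) x)"

lemma Nn_card: "Nn V c n x = of_nat (card {k\<in>{..<2^n}. x \<in> Iv V c n k})"
proof -
  have "Nn V c n x = (\<Sum>k\<in>{..<2^n}. if x \<in> Iv V c n k then 1 else 0)"
    unfolding Nn_def by (rule sum.cong) (auto simp: indicator_def)
  also have "\<dots> = (\<Sum>k\<in>{..<2^n} \<inter> {k. x \<in> Iv V c n k}. 1) + (\<Sum>k\<in>{..<2^n} \<inter> - {k. x \<in> Iv V c n k}. 0)"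
    by (rule sum.If_cases) simp
  also have "\<dots> = of_nat (card ({..<2^n} \<inter> {k. x \<in> Iv V c n k}))" by simp
  finally show ?thesis by (simp add: Int_def)
qed

lemma grid_mono: "c > 0 \<Longrightarrow> grid c n a < grid c n b \<longleftrightarrow> a < b"
  unfolding grid_def by (simp add: field_simps)

lemma grid_ceil:
  assumes c: "c > 0" and y: "y \<ge> 0"
  shows "y \<le> grid c n (nat \<lceil>y * 2^n / c\<rceil>) \<and> grid c n (nat \<lceil>y * 2^n / c\<rceil>) < y + c / 2^n"
proof -
  define z where "z = y * 2^n / c"
  have z0: "z \<ge> 0" using c y by (simp add: z_def)
  have r: "real (nat \<lceil>z\<rceil>) = of_int \<lceil>z\<rceil>" using z0 by simp
  have g: "grid c n (nat \<lceil>z\<rceil>) = c * of_int \<lceil>z\<rceil> / 2^n" unfolding grid_def r ..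
  have yz: "y = c * z / 2^n" using c by (simp add: z_def)
  have "c * z / 2^n \<le> c * of_int \<lceil>z\<rceil> / 2^n"
    using c by (intro divide_right_mono mult_left_mono) auto
  moreover have "c * of_int \<lceil>z\<rceil> / 2^n < c * (z + 1) / 2^n"
    using c by (intro divide_strict_right_mono mult_strict_left_mono) (use ceiling_correct[of z] in auto)
  ultimately show ?thesis unfolding g z_def[symmetric] using yz by (auto simp: field_simps)
qed

context
  fixes V :: "real \<Rightarrow> real"
  assumes cad: "cadlag V" and fv: "finite_variation V"
begin

lemma chain_count:
  assumes c: "c > 0" and inc: "\<forall>j<m. s j < s (Suc j)" and rng: "\<forall>j\<le>m. 0 \<le> s j \<and> s j < c"
    and alt: "\<forall>j<m. (V (s j) - x) * (V (s (Suc j)) - x) < 0"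
  shows "eventually (\<lambda>n. of_nat m \<le> Nn V c n x) sequentially"
proof (cases "m = 0")
  case True thus ?thesis by simp
next
  case False
  have nz: "\<forall>j\<le>m. V (s j) \<noteq> x"
  proof (intro allI impI)
    fix j assume j: "j \<le> m"
    show "V (s j) \<noteq> x"
    proof (cases "j < m")
      case True thus ?thesis using alt by fastforce
    next
      case False
      hence "j = Suc (m - 1)" using j \<open>m \<noteq> 0\<close> by auto
      thus ?thesis using alt[rule_format, of "m - 1"] \<open>m \<noteq> 0\<close> by fastforce
    qed
  qed
  have alt': "\<forall>j<m. (V (s j) < x \<longleftrightarrow> \<not> V (s (Suc j)) < x)"
    using alt nz by (auto simp: mult_less_0_iff)
  have "\<forall>j. \<exists>d>0. j \<le> m \<longrightarrow> (\<forall>r. s j \<le> r \<longrightarrow> r < s j + d \<longrightarrow> (V r < x \<longleftrightarrow> V (s j) < x) \<and> V r \<noteq> x)"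
  proof
    fix j
    show "\<exists>d>0. j \<le> m \<longrightarrow> (\<forall>r. s j \<le> r \<longrightarrow> r < s j + d \<longrightarrow> (V r < x \<longleftrightarrow> V (s j) < x) \<and> V r \<noteq> x)"
    proof (cases "j \<le> m")
      case False thus ?thesis by (intro exI[of _ 1]) auto
    next
      case True
      show ?thesis
      proof (cases "V (s j) < x")
        case True
        then obtain d where "d > 0" "\<forall>r. s j \<le> r \<longrightarrow> r < s j + d \<longrightarrow> V r < x"
          using right_lt[OF cad, of "s j" x] rng \<open>j \<le> m\<close> by auto
        thus ?thesis using True by (intro exI[of _ d]) auto
      next
        case False
        hence "V (s j) > x" using nz \<open>j \<le> m\<close> by force
        then obtain d where "d > 0" "\<forall>r. s j \<le> r \<longrightarrow> r < s j + d \<longrightarrow> V r > x"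
          using right_gt[OF cad, of "s j" x] rng \<open>j \<le> m\<close> by auto
        thus ?thesis using False by (intro exI[of _ d]) auto
      qed
    qed
  qed
  then obtain \<delta> where \<delta>: "\<And>j. \<delta> j > 0"
    "\<And>j r. j \<le> m \<Longrightarrow> s j \<le> r \<Longrightarrow> r < s j + \<delta> j \<Longrightarrow> (V r < x \<longleftrightarrow> V (s j) < x) \<and> V r \<noteq> x"
    by metis
  define E where "E = \<delta> ` {..m} \<union> (\<lambda>j. s (Suc j) - s j) ` {..<m} \<union> {c - s m}"
  define \<eta> where "\<eta> = Min E"
  have fE: "finite E" "E \<noteq> {}" by (auto simp: E_def)
  have \<eta>0: "\<eta> > 0" unfolding \<eta>_def using fE
    by (subst Min_gr_iff) (use \<delta> inc rng in \<open>auto simp: E_def\<close>)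
  have \<eta>1: "\<And>j. j \<le> m \<Longrightarrow> \<eta> \<le> \<delta> j" "\<And>j. j < m \<Longrightarrow> \<eta> \<le> s (Suc j) - s j" "\<eta> \<le> c - s m"
    unfolding \<eta>_def by (rule Min_le[OF fE(1)], simp add: E_def)+
  have ev: "eventually (\<lambda>n. c / 2^n < \<eta>) sequentially"
    using order_tendstoD(2)[OF LIMSEQ_divide_realpow_zero[of 2 c] \<eta>0] by simp
  show ?thesis
  proof (rule eventually_mono[OF ev])
    fix n assume hn: "c / 2^n < \<eta>"
    define k where "k j = nat \<lceil>s j * 2^n / c\<rceil>" for j
    have gk: "\<And>j. j \<le> m \<Longrightarrow> s j \<le> grid c n (k j) \<and> grid c n (k j) < s j + c / 2^n"
      unfolding k_def using grid_ceil[OF c] rng by auto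
    have kinc: "\<And>j. j < m \<Longrightarrow> k j < k (Suc j)"
    proof -
      fix j assume j: "j < m"
      have "grid c n (k j) < s (Suc j)" using gk[of j] \<eta>1(2)[OF j] hn j by auto
      also have "\<dots> \<le> grid c n (k (Suc j))" using gk[of "Suc j"] j by auto
      finally show "k j < k (Suc j)" using grid_mono[OF c] by blast
    qed
    have kmono: "\<And>j1 j2. j1 < j2 \<Longrightarrow> j2 \<le> m \<Longrightarrow> k j1 < k j2"
    proof -
      fix j1 j2 :: nat
      show "j1 < j2 \<Longrightarrow> j2 \<le> m \<Longrightarrow> k j1 < k j2"
      proof (induction j2)
        case 0 thus ?case by simp
      next
        case (Suc j2)
        show ?case
        proof (cases "j1 = j2")
          case True thus ?thesis using kinc Suc by auto
        next
          case False thus ?thesis using Suc kinc[of j2] by auto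
        qed
      qed
    qed
    have km: "k m < 2^n"
    proof -
      have "grid c n (k m) < c" using gk[of m] \<eta>1(3) hn by auto
      also have "c = grid c n (2^n)" by (simp add: grid_def)
      finally show ?thesis using grid_mono[OF c] by blast
    qed
    have sg: "\<And>j. j \<le> m \<Longrightarrow> (V (grid c n (k j)) < x \<longleftrightarrow> V (s j) < x) \<and> V (grid c n (k j)) \<noteq> x"
    proof -
      fix j assume j: "j \<le> m"
      show "(V (grid c n (k j)) < x \<longleftrightarrow> V (s j) < x) \<and> V (grid c n (k j)) \<noteq> x"
        by (rule \<delta>(2)[OF j]) (use gk[OF j] \<eta>1(1)[OF j] hn in auto)
    qed
    have "\<forall>j. \<exists>i. j < m \<longrightarrow> k j \<le> i \<and> i < k (Suc j) \<and> x \<in> Iv V c n i"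
    proof
      fix j
      show "\<exists>i. j < m \<longrightarrow> k j \<le> i \<and> i < k (Suc j) \<and> x \<in> Iv V c n i"
      proof (cases "j < m")
        case False thus ?thesis by auto
      next
        case True
        have "(V (grid c n (k j)) < x \<and> x \<le> V (grid c n (k (Suc j)))) \<or>
              (V (grid c n (k (Suc j))) < x \<and> x \<le> V (grid c n (k j)))"
          using sg[of j] sg[of "Suc j"] alt'[rule_format, OF True] True by auto
        then obtain i where "k j \<le> i \<and> i < k (Suc j) \<and> min (V (grid c n i)) (V (grid c n (Suc i))) < x \<and>
            x \<le> max (V (grid c n i)) (V (grid c n (Suc i)))"
          using disc_cross[of "k j" "k (Suc j)" "\<lambda>i. V (grid c n i)" x] kinc[OF True] by blast
        thus ?thesis using True by (auto simp: Iv_def)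
      qed
    qed
    then obtain h where h: "\<And>j. j < m \<Longrightarrow> k j \<le> h j \<and> h j < k (Suc j) \<and> x \<in> Iv V c n (h j)" by metis
    have inj: "inj_on h {..<m}"
    proof (rule inj_onI)
      fix a b assume ab: "a \<in> {..<m}" "b \<in> {..<m}" "h a = h b"
      show "a = b"
      proof (rule ccontr)
        assume "a \<noteq> b"
        hence "a < b \<or> b < a" by auto
        thus False
        proof
          assume "a < b"
          hence "k (Suc a) \<le> k b" using kmono[of "Suc a" b] ab by (cases "Suc a = b") auto
          thus False using h[of a] h[of b] ab by auto
        next
          assume "b < a"
          hence "k (Suc b) \<le> k a" using kmono[of "Suc b" a] ab by (cases "Suc b = a") auto
          thus False using h[of a] h[of b] ab by auto
        qed
      qed
    qed
    have sub: "h ` {..<m} \<subseteq> {k\<in>{..<2^n}. x \<in> Iv V c n k}"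
    proof
      fix i assume "i \<in> h ` {..<m}"
      then obtain j where j: "j < m" "i = h j" by auto
      have "k (Suc j) \<le> k m" using kmono[of "Suc j" m] j by (cases "Suc j = m") auto
      thus "i \<in> {k\<in>{..<2^n}. x \<in> Iv V c n k}" using h[OF j(1)] j km by auto
    qed
    have "m \<le> card {k\<in>{..<2^n}. x \<in> Iv V c n k}"
      using card_mono[OF _ sub] card_image[OF inj] by simp
    thus "of_nat m \<le> Nn V c n x" unfolding Nn_card by simp
  qed
qed

lemma Nn_integral:
  assumes c: "c > 0" and B: "\<And>n p. 0 \<le> p 0 \<Longrightarrow> p n \<le> c \<Longrightarrow> (\<forall>i<n. p i \<le> p (Suc i)) \<Longrightarrow>
   (\<Sum>i<n. \<bar>V (p (Suc i)) - V (p i)\<bar>) \<le> B"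
  shows "(\<integral>\<^sup>+x. Nn V c n x \<partial>lborel) \<le> ennreal B"
proof -
  have "(\<integral>\<^sup>+x. Nn V c n x \<partial>lborel) = (\<Sum>k<2^n. emeasure lborel (Iv V c n k))"
    unfolding Nn_def by (subst nn_integral_sum) (auto simp: Iv_def)
  also have "\<dots> = (\<Sum>k<2^n. ennreal \<bar>V (grid c n (Suc k)) - V (grid c n k)\<bar>)"
    by (rule sum.cong) (auto simp: Iv_def max_def min_def)
  also have "\<dots> = ennreal (\<Sum>k<2^n. \<bar>V (grid c n (Suc k)) - V (grid c n k)\<bar>)"
    by simp
  also have "\<dots> \<le> ennreal B"
  proof (rule ennreal_leI, rule B)
    show "0 \<le> grid c n 0" by (simp add: grid_def)
    show "grid c n (2^n) \<le> c" by (simp add: grid_def)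
    show "\<forall>i<2^n. grid c n i \<le> grid c n (Suc i)" using grid_mono[OF c] by (auto intro: less_imp_le)
  qed
  finally show ?thesis .
qed

lemma Nn_AE: "c > 0 \<Longrightarrow> AE x in lborel. liminf (\<lambda>n. Nn V c n x) \<noteq> \<infinity>"
proof -
  assume c: "c > 0"
  obtain B where B: "\<And>n p. 0 \<le> p 0 \<Longrightarrow> p n \<le> c \<Longrightarrow> (\<forall>i<n. p i \<le> p (Suc i)) \<Longrightarrow>
   (\<Sum>i<n. \<bar>V (p (Suc i)) - V (p i)\<bar>) \<le> B" using bv_bound[OF cad fv, of c] c by auto
  have meas: "\<And>n. Nn V c n \<in> borel_measurable lborel"
    unfolding Nn_def[abs_def] by (auto simp: Iv_def)
  have "(\<integral>\<^sup>+x. liminf (\<lambda>n. Nn V c n x) \<partial>lborel) \<le> liminf (\<lambda>n. \<integral>\<^sup>+x. Nn V c n x \<partial>lborel)"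
    by (rule nn_integral_liminf[OF meas])
  also have "\<dots> \<le> ennreal B"
    by (rule Liminf_le) (auto intro!: always_eventually Nn_integral[OF c B])
  finally have "(\<integral>\<^sup>+x. liminf (\<lambda>n. Nn V c n x) \<partial>lborel) \<le> ennreal B" .
  hence "(\<integral>\<^sup>+x. liminf (\<lambda>n. Nn V c n x) \<partial>lborel) \<noteq> \<infinity>"
    using le_less_trans[OF _ ennreal_less_top] by fastforce
  moreover have "(\<lambda>x. liminf (\<lambda>n. Nn V c n x)) \<in> borel_measurable lborel"
    using meas by measurable
  ultimately show ?thesis by (intro nn_integral_PInf_AE) auto
qed

end

context
  fixes V :: "real \<Rightarrow> real"
  assumes cad: "cadlag V" and fv: "finite_variation V"
begin

lemma chain_exists:
  assumes x: "x \<notin> extval V" and inf: "infinite (crossing_times V x \<inter> {0..T})"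
  shows "\<exists>s. (\<forall>j<m. s j < s (Suc j)) \<and> (\<forall>j\<le>m. 0 \<le> s j \<and> s j < T + 1) \<and>
     (\<forall>j<m. (V (s j) - x) * (V (s (Suc j)) - x) < 0)"
proof -
  define C where "C = crossing_times V x \<inter> {0..T}"
  obtain f :: "nat \<Rightarrow> real" where f: "inj f" "range f \<subseteq> C"
    using infinite_countable_subset[of C] inf by (auto simp: C_def)
  obtain r where r: "strict_mono r" "monoseq (\<lambda>n. f (r n))" using seq_monosub by blast
  define u where "u n = f (r n)" for n
  have uinj: "inj u" unfolding u_def using f(1) strict_mono_imp_inj_on[OF r(1)]
    by (simp add: inj_def) (metis injD f(1) strict_mono_eq[OF r(1)])
  have uC: "\<And>n. u n \<in> C" using f(2) by (auto simp: u_def)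
  have uT: "\<And>n. 0 \<le> u n \<and> u n \<le> T" using uC by (auto simp: C_def)
  have ts: "\<And>n \<epsilon>. \<epsilon> > 0 \<Longrightarrow> (\<exists>s\<ge>0. \<bar>s - u n\<bar> < \<epsilon> \<and> V s > x) \<and> (\<exists>s\<ge>0. \<bar>s - u n\<bar> < \<epsilon> \<and> V s < x)"
    using two_sided[OF cad fv x] uC by (auto simp: C_def)
  have "\<forall>n \<epsilon>. \<exists>p q. \<epsilon> > 0 \<longrightarrow> (p \<ge> 0 \<and> \<bar>p - u n\<bar> < \<epsilon> \<and> V p > x \<and> q \<ge> 0 \<and> \<bar>q - u n\<bar> < \<epsilon> \<and> V q < x)"
    using ts by blast
  then obtain P Q where PQ: "\<And>n \<epsilon>. \<epsilon> > 0 \<Longrightarrow> P n \<epsilon> \<ge> 0 \<and> \<bar>P n \<epsilon> - u n\<bar> < \<epsilon> \<and> V (P n \<epsilon>) > x \<and>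
     Q n \<epsilon> \<ge> 0 \<and> \<bar>Q n \<epsilon> - u n\<bar> < \<epsilon> \<and> V (Q n \<epsilon>) < x" by metis
  define \<rho> where "\<rho> j = min (min \<bar>u (2*j+1) - u (2*j)\<bar> \<bar>u (2*j+2) - u (2*j+1)\<bar>) 1" for j
  have \<rho>0: "\<And>j. \<rho> j > 0" unfolding \<rho>_def using uinj by (auto simp: inj_eq)
  define s where "s j = (if even j then P (2*j+1) (\<rho> j) else Q (2*j+1) (\<rho> j))" for j
  have s1: "\<And>j. s j \<ge> 0 \<and> \<bar>s j - u (2*j+1)\<bar> < \<rho> j"
    using PQ \<rho>0 by (auto simp: s_def)
  have s2: "\<And>j. (V (s j) > x \<longleftrightarrow> even j) \<and> V (s j) \<noteq> x"
  proof -
    fix j show "(V (s j) > x \<longleftrightarrow> even j) \<and> V (s j) \<noteq> x"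
      using PQ[OF \<rho>0[of j], of "2*j+1"] by (auto simp: s_def)
  qed
  have sT: "\<And>j. s j < T + 1"
  proof -
    fix j
    have "\<bar>s j - u (2*j+1)\<bar> < 1" using s1[of j] by (auto simp: \<rho>_def)
    thus "s j < T + 1" using uT[of "2*j+1"] by linarith
  qed
  have alt: "\<And>j. (V (s j) - x) * (V (s (Suc j)) - x) < 0"
  proof -
    fix j
    show "(V (s j) - x) * (V (s (Suc j)) - x) < 0"
    proof (cases "even j")
      case True
      hence "V (s j) > x" "V (s (Suc j)) < x" using s2[of j] s2[of "Suc j"] by auto
      thus ?thesis by (simp add: mult_pos_neg)
    next
      case False
      hence "V (s j) < x" "V (s (Suc j)) > x" using s2[of j] s2[of "Suc j"] by auto
      thus ?thesis by (simp add: mult_neg_pos)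
    qed
  qed
  have "incseq u \<or> decseq u" using r(2) by (simp add: monoseq_iff u_def incseq_def decseq_def)
  thus ?thesis
  proof
    assume inc: "incseq u"
    have ui: "\<And>n. u n < u (Suc n)" using inc uinj by (metis incseq_SucD inj_eq less_le n_not_Suc_n)
    have ss: "\<And>j. s j < s (Suc j)"
    proof -
      fix j
      have a: "s j < u (2*j+1) + \<rho> j" using s1[of j] by auto
      have b: "\<rho> j \<le> u (2*j+2) - u (2*j+1)" using ui[of "2*j+1"] by (auto simp: \<rho>_def)
      have c: "\<rho> (Suc j) \<le> u (2*j+3) - u (2*j+2)" using ui[of "2*j+2"]
        by (auto simp: \<rho>_def numeral_3_eq_3)
      have d: "u (2*j+3) - \<rho> (Suc j) < s (Suc j)" using s1[of "Suc j"] by (auto simp: numeral_3_eq_3)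
      show "s j < s (Suc j)" using a b c d by linarith
    qed
    show ?thesis using ss s1 sT alt by (intro exI[of _ s]) auto
  next
    assume dec: "decseq u"
    have ud: "\<And>n. u (Suc n) < u n" using dec uinj by (metis decseq_SucD inj_eq less_le n_not_Suc_n)
    have ss: "\<And>j. s (Suc j) < s j"
    proof -
      fix j
      have a: "u (2*j+1) - \<rho> j < s j" using s1[of j] by auto
      have b: "\<rho> j \<le> u (2*j+1) - u (2*j+2)" using ud[of "2*j+1"] by (auto simp: \<rho>_def)
      have c: "\<rho> (Suc j) \<le> u (2*j+2) - u (2*j+3)" using ud[of "2*j+2"]
        by (auto simp: \<rho>_def numeral_3_eq_3)
      have d: "s (Suc j) < u (2*j+3) + \<rho> (Suc j)" using s1[of "Suc j"] by (auto simp: numeral_3_eq_3)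
      show "s (Suc j) < s j" using a b c d by linarith
    qed
    show ?thesis
    proof (intro exI[of _ "\<lambda>i. s (m - i)"] conjI allI impI)
      fix j assume "j < m"
      hence e: "m - j = Suc (m - Suc j)" by simp
      show "s (m - j) < s (m - Suc j)" unfolding e by (rule ss)
      have "(V (s (m - Suc j)) - x) * (V (s (Suc (m - Suc j))) - x) < 0" by (rule alt)
      thus "(V (s (m - j)) - x) * (V (s (m - Suc j)) - x) < 0" unfolding e by (simp add: mult.commute)
    next
      fix j assume "j \<le> m"
      show "0 \<le> s (m - j)" "s (m - j) < T + 1" using s1 sT by auto
    qed
  qed
qed

end

context
  fixes V :: "real \<Rightarrow> real"
  assumes cad: "cadlag V" and fv: "finite_variation V"
begin

definition jumpvals :: "real set" where
  "jumpvals = V ` {s. s > 0 \<and> V s \<noteq> vleft V s} \<union> vleft V ` {s. s > 0 \<and> V s \<noteq> vleft V s}"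

lemma jumpvals_countable: "countable jumpvals"
  unfolding jumpvals_def using jumps_countable[OF cad fv] by auto

lemma simple_if:
  assumes x1: "x \<notin> extval V" and x2: "x \<notin> jumpvals"
    and x3: "\<forall>T::nat. liminf (\<lambda>n. Nn V (real T + 1) n x) \<noteq> \<infinity>"
  shows "simple_level V x"
  unfolding simple_level_def
proof (intro conjI allI)
  show "\<not> (\<exists>t>0. V t - vleft V t \<noteq> 0 \<and> (x = V t \<or> x = vleft V t))"
    using x2 unfolding jumpvals_def by auto
next
  fix T :: real
  show "finite (crossing_times V x \<inter> {0..T})"
  proof (rule ccontr)
    assume inf0: "infinite (crossing_times V x \<inter> {0..T})"
    hence T0: "T \<ge> 0" by (cases "T \<ge> 0") auto
    define N where "N = nat \<lceil>T\<rceil>"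
    have TN: "T \<le> real N" unfolding N_def by linarith
    have inf: "infinite (crossing_times V x \<inter> {0..real N})"
      by (rule infinite_super[OF _ inf0]) (use TN in auto)
    have c: "real N + 1 > 0" by simp
    have "of_nat m \<le> liminf (\<lambda>n. Nn V (real N + 1) n x)" for m
    proof -
      obtain s where s: "\<forall>j<m. s j < s (Suc j)" "\<forall>j\<le>m. 0 \<le> s j \<and> s j < real N + 1"
        "\<forall>j<m. (V (s j) - x) * (V (s (Suc j)) - x) < 0"
        using chain_exists[OF cad fv x1 inf, of m] by blast
      show ?thesis
        by (rule Liminf_bounded, rule chain_count[OF cad fv c s])
    qed
    hence "liminf (\<lambda>n. Nn V (real N + 1) n x) = \<infinity>"
      by (metis ennreal_Ex_less_of_nat infinity_ennreal_def not_le top.not_eq_extremum)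
    thus False using x3 by blast
  qed
qed

lemma AE_simple_lborel: "AE x in lborel. simple_level V x"
proof -
  have n1: "AE x in lborel. x \<notin> extval V"
    by (rule AE_not_in, rule countable_imp_null_set_lborel, rule extval_countable)
  have n2: "AE x in lborel. x \<notin> jumpvals"
    by (rule AE_not_in, rule countable_imp_null_set_lborel, rule jumpvals_countable)
  have n3: "AE x in lborel. \<forall>T::nat. liminf (\<lambda>n. Nn V (real T + 1) n x) \<noteq> \<infinity>"
    by (subst AE_all_countable) (intro allI Nn_AE[OF cad fv], simp)
  show "AE x in lborel. simple_level V x"
    using n1 n2 n3 by eventually_elim (rule simple_if)
qed

lemma AE_simple: "AE x in lebesgue. simple_level V x"
  using AE_simple_lborel by (rule AE_completion)

end

lemma int_Icc:
  fixes h F :: "real \<Rightarrow> real"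
  assumes ab: "a \<le> b" and ch: "continuous_on UNIV h" and d: "\<And>x. (F has_real_derivative h x) (at x)"
  shows "integrable lborel (\<lambda>x. indicator {a..b} x * h x) \<and> (\<integral>x. indicator {a..b} x * h x \<partial>lborel) = F b - F a"
proof
  have "set_integrable lborel {a..b} h"
    by (rule borel_integrable_atLeastAtMost') (rule continuous_on_subset[OF ch subset_UNIV])
  thus "integrable lborel (\<lambda>x. indicator {a..b} x * h x)" by (simp add: set_integrable_def)
  have "integral\<^sup>L lborel (\<lambda>x. indicator {a .. b} x *\<^sub>R h x) = F b - F a"
    by (rule integral_FTC_atLeastAtMost[OF ab])
       (use d continuous_on_subset[OF ch subset_UNIV] in \<open>auto simp: has_real_derivative_iff_has_vector_derivative intro: has_vector_derivative_at_within\<close>)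
  thus "(\<integral>x. indicator {a..b} x * h x \<partial>lborel) = F b - F a" by simp
qed

context
  fixes V f f' :: "real \<Rightarrow> real" and t :: real
  assumes cad: "cadlag V" and fv: "finite_variation V"
    and der: "\<And>x. (f has_real_derivative f' x) (at x)" and cf: "continuous_on UNIV f'" and tpos: "t > 0"
begin

definition "Mb = (SOME M. \<forall>s. 0 \<le> s \<longrightarrow> s \<le> t \<longrightarrow> \<bar>V s\<bar> \<le> M)"

lemma Mb: "0 \<le> s \<Longrightarrow> s \<le> t \<Longrightarrow> \<bar>V s\<bar> \<le> Mb"
  unfolding Mb_def using someI_ex[OF V_bounded[OF cad fv, of t]] tpos by auto

lemma Mb_left: "0 < s \<Longrightarrow> s \<le> t \<Longrightarrow> \<bar>vleft V s\<bar> \<le> Mb"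
proof -
  assume s: "0 < s" "s \<le> t"
  have r: "\<And>r. 0 < r \<Longrightarrow> r < s \<Longrightarrow> \<bar>V r\<bar> \<le> Mb" using Mb s by auto
  have "vleft V s \<le> Mb" by (rule vleft_le[OF cad s(1)]) (use r in \<open>force simp: abs_le_iff\<close>)
  moreover have "vleft V s \<ge> - Mb" by (rule vleft_ge[OF cad s(1)]) (use r in \<open>force simp: abs_le_iff\<close>)
  ultimately show ?thesis by auto
qed

definition "Lb = (SOME L. L \<ge> 0 \<and> (\<forall>y. \<bar>y\<bar> \<le> Mb \<longrightarrow> \<bar>f' y\<bar> \<le> L))"

lemma Lb: "Lb \<ge> 0 \<and> (\<forall>y. \<bar>y\<bar> \<le> Mb \<longrightarrow> \<bar>f' y\<bar> \<le> Lb)"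
proof -
  have "compact (f' ` {-Mb..Mb})"
    by (rule compact_continuous_image) (use cf continuous_on_subset in auto)
  then obtain b where b: "b > 0" "\<forall>z\<in>f' ` {-Mb..Mb}. norm z \<le> b"
    using compact_imp_bounded bounded_pos by blast
  have "\<exists>L. L \<ge> 0 \<and> (\<forall>y. \<bar>y\<bar> \<le> Mb \<longrightarrow> \<bar>f' y\<bar> \<le> L)"
    using b by (intro exI[of _ b]) (auto simp: abs_le_iff)
  thus ?thesis unfolding Lb_def by (rule someI_ex)
qed

lemma lip: "\<bar>a\<bar> \<le> Mb \<Longrightarrow> \<bar>b\<bar> \<le> Mb \<Longrightarrow> \<bar>f a - f b\<bar> \<le> Lb * \<bar>a - b\<bar>"
proof -
  have main: "\<bar>f v - f u\<bar> \<le> Lb * \<bar>v - u\<bar>" if uv: "u < v" "\<bar>u\<bar> \<le> Mb" "\<bar>v\<bar> \<le> Mb" for u v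
  proof -
    obtain z where z: "u < z" "z < v" "f v - f u = (v - u) * f' z"
      using MVT2[OF uv(1), of f f'] der by blast
    have "\<bar>z\<bar> \<le> Mb" using z uv by auto
    hence "\<bar>f' z\<bar> \<le> Lb" using Lb by auto
    hence "\<bar>f v - f u\<bar> \<le> \<bar>v - u\<bar> * Lb" unfolding z(3) abs_mult by (intro mult_left_mono) auto
    thus ?thesis by (simp add: mult.commute)
  qed
  assume "\<bar>a\<bar> \<le> Mb" "\<bar>b\<bar> \<le> Mb"
  thus ?thesis using main[of a b] main[of b a] by (cases a b rule: linorder_cases) (auto simp: abs_minus_commute)
qed

definition "gj s = f (V s) - f (vleft V s)"

lemma gj_bound: "s \<in> {0<..t} \<Longrightarrow> \<bar>gj s\<bar> \<le> Lb * \<bar>V s - vleft V s\<bar>"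
  unfolding gj_def using Mb[of s] Mb_left[of s] by (intro lip) auto

lemma gj_summable: "gj summable_on {0<..t}"
proof -
  have "(\<lambda>s. Lb * \<bar>V s - vleft V s\<bar>) summable_on {0<..t}"
    using jump_summable[OF cad fv, of t] tpos by (intro summable_on_cmult_right) auto
  hence "Infinite_Sum.abs_summable_on (\<lambda>s. Lb * \<bar>V s - vleft V s\<bar>) {0<..t}"
    by (rule summable_on_iff_abs_summable_on_real[THEN iffD1])
  hence "Infinite_Sum.abs_summable_on gj {0<..t}"
    by (rule Infinite_Sum.abs_summable_on_comparison_test) (use gj_bound Lb in auto)
  thus ?thesis by (rule summable_on_iff_abs_summable_on_real[THEN iffD2])
qed

definition "Sj = {s\<in>{0<..t}. V s \<noteq> vleft V s} \<union> range (\<lambda>n::nat. t / real (Suc n))"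
definition "ej = from_nat_into Sj"

lemma Sj_sub: "Sj \<subseteq> {0<..t}"
  unfolding Sj_def using tpos by (auto simp: field_simps)

lemma ej_bij: "bij_betw ej UNIV Sj"
proof -
  have "countable {s\<in>{0<..t}. V s \<noteq> vleft V s}"
    by (rule countable_subset[OF _ jumps_countable[OF cad fv]]) auto
  hence c: "countable Sj" unfolding Sj_def by auto
  have "inj (\<lambda>n::nat. t / real (Suc n))" using tpos by (auto simp: inj_def field_simps)
  hence "infinite (range (\<lambda>n::nat. t / real (Suc n)))" using range_inj_infinite by blast
  hence "infinite Sj" unfolding Sj_def by auto
  thus ?thesis unfolding ej_def using bij_betw_from_nat_into[OF c] by auto
qed

lemma gj_sums: "(\<lambda>i. gj (ej i)) sums (\<Sum>\<^sub>\<infinity>s\<in>{0<..t}. gj s)"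
proof -
  have eq: "(\<Sum>\<^sub>\<infinity>s\<in>{0<..t}. gj s) = (\<Sum>\<^sub>\<infinity>s\<in>Sj. gj s)"
    by (rule infsum_cong_neutral) (use Sj_sub in \<open>auto simp: gj_def Sj_def\<close>)
  have "gj summable_on Sj" by (rule summable_on_subset_banach[OF gj_summable Sj_sub])
  hence "(gj has_sum (\<Sum>\<^sub>\<infinity>s\<in>Sj. gj s)) Sj" by (rule has_sum_infsum)
  hence "((\<lambda>i. gj (ej i)) has_sum (\<Sum>\<^sub>\<infinity>s\<in>Sj. gj s)) UNIV"
    using has_sum_reindex_bij_betw[OF ej_bij] by blast
  thus ?thesis unfolding eq by (rule has_sum_imp_sums)
qed

lemma dv_summable: "summable (\<lambda>i. \<bar>V (ej i) - vleft V (ej i)\<bar>)"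
proof -
  have js: "(\<lambda>s. \<bar>V s - vleft V s\<bar>) summable_on {0<..t}"
    using jump_summable[OF cad fv, of t] tpos by auto
  have "(\<lambda>s. \<bar>V s - vleft V s\<bar>) summable_on Sj"
    by (rule summable_on_subset_banach[OF js Sj_sub])
  hence "(\<lambda>i. \<bar>V (ej i) - vleft V (ej i)\<bar>) summable_on UNIV"
    using summable_on_reindex_bij_betw[OF ej_bij, of "\<lambda>s. \<bar>V s - vleft V s\<bar>"] by (simp only:)
  thus ?thesis by (rule summable_on_imp_summable)
qed


definition "js s x = (if vleft V s < V s then indicator {vleft V s..V s} x
   else if V s < vleft V s then - indicator {V s..vleft V s} x else (0::real))"

lemma js_int: "integrable lborel (\<lambda>x. f' x * js s x) \<and> (\<integral>x. f' x * js s x \<partial>lborel) = gj s"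
proof (cases "vleft V s < V s")
  case True
  have "integrable lborel (\<lambda>x. indicator {vleft V s..V s} x * f' x) \<and>
     (\<integral>x. indicator {vleft V s..V s} x * f' x \<partial>lborel) = f (V s) - f (vleft V s)"
    by (rule int_Icc[OF _ cf der]) (use True in auto)
  thus ?thesis using True by (simp add: js_def gj_def mult.commute)
next
  case False
  show ?thesis
  proof (cases "V s < vleft V s")
    case True
    have i: "integrable lborel (\<lambda>x. indicator {V s..vleft V s} x * f' x) \<and>
       (\<integral>x. indicator {V s..vleft V s} x * f' x \<partial>lborel) = f (vleft V s) - f (V s)"
      by (rule int_Icc[OF _ cf der]) (use True in auto)
    have e: "(\<lambda>x. f' x * js s x) = (\<lambda>x. - (indicator {V s..vleft V s} x * f' x))"
      using True False by (auto simp: js_def)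
    show ?thesis unfolding e using i by (simp add: gj_def)
  next
    case False2: False
    hence "vleft V s = V s" using False by auto
    thus ?thesis using False False2 by (simp add: js_def gj_def)
  qed
qed

lemma js_abs: "integrable lborel (js s) \<and> integrable lborel (\<lambda>x. \<bar>js s x\<bar>) \<and>
   (\<integral>x. \<bar>js s x\<bar> \<partial>lborel) = \<bar>V s - vleft V s\<bar>"
proof -
  have I: "integrable lborel (\<lambda>x. indicator {a..b} x * (1::real)) \<and> (\<integral>x. indicator {a..b} x * (1::real) \<partial>lborel) = b - a"
    if "a \<le> b" for a b :: real
  proof -
    have c: "continuous_on UNIV (\<lambda>_::real. 1::real)" by simp
    have d: "\<And>x. ((\<lambda>x. x) has_real_derivative 1) (at x)" by (rule DERIV_ident)
    from int_Icc[OF that c d] show ?thesis by simp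
  qed
  show ?thesis
  proof (cases "vleft V s < V s")
    case True
    have e: "js s = (\<lambda>x. indicator {vleft V s..V s} x)" using True by (auto simp: js_def)
    show ?thesis unfolding e using I[of "vleft V s" "V s"] True by simp
  next
    case False
    show ?thesis
    proof (cases "V s < vleft V s")
      case True
      have e: "js s = (\<lambda>x. - indicator {V s..vleft V s} x)" using True False by (auto simp: js_def)
      show ?thesis unfolding e using I[of "V s" "vleft V s"] True by simp
    next
      case False2: False
      have e: "js s = (\<lambda>x. 0)" using False False2 by (auto simp: js_def)
      show ?thesis unfolding e using False False2 by simp
    qed
  qed
qed

lemma js_support: "js s x \<noteq> 0 \<Longrightarrow> min (V s) (vleft V s) \<le> x \<and> x \<le> max (V s) (vleft V s)"
  by (auto simp: js_def indicator_def split: if_splits)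

lemma js_bound: "s \<in> {0<..t} \<Longrightarrow> \<bar>f' x * js s x\<bar> \<le> Lb * \<bar>js s x\<bar>"
proof (cases "js s x = 0")
  case False
  assume s: "s \<in> {0<..t}"
  have "\<bar>x\<bar> \<le> Mb" using js_support[OF False] Mb[of s] Mb_left[of s] s by (auto simp: abs_le_iff)
  hence "\<bar>f' x\<bar> \<le> Lb" using Lb by auto
  thus ?thesis by (simp add: abs_mult mult_right_mono)
qed simp

lemma js_int_bound: "s \<in> {0<..t} \<Longrightarrow> (\<integral>x. norm (f' x * js s x) \<partial>lborel) \<le> Lb * \<bar>V s - vleft V s\<bar>"
proof -
  assume s: "s \<in> {0<..t}"
  have "(\<integral>x. norm (f' x * js s x) \<partial>lborel) \<le> (\<integral>x. Lb * \<bar>js s x\<bar> \<partial>lborel)"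
    by (rule integral_mono) (use js_int[of s] js_abs[of s] js_bound[OF s] in auto)
  also have "\<dots> = Lb * \<bar>V s - vleft V s\<bar>" using js_abs[of s] by simp
  finally show ?thesis .
qed

definition "JU x = {s\<in>{0<..t}. vleft V s < x \<and> x < V s}"
definition "JD x = {s\<in>{0<..t}. V s < x \<and> x < vleft V s}"

lemma js_simple:
  assumes x: "simple_level V x" and s: "s \<in> {0<..t}"
  shows "js s x = (if s \<in> JU x then 1 else if s \<in> JD x then -1 else 0)"
proof -
  have nj: "V s \<noteq> vleft V s \<Longrightarrow> x \<noteq> V s \<and> x \<noteq> vleft V s" using x s unfolding simple_level_def by auto
  show ?thesis using nj s by (auto simp: js_def JU_def JD_def indicator_def)
qed

lemma JUD_finite: "simple_level V x \<Longrightarrow> finite (JU x \<union> JD x)"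
  unfolding simple_level_def
  by (rule finite_subset[of _ "crossing_times V x \<inter> {0..t}"]) (auto simp: JU_def JD_def crossing_times_def)

lemma JUD_Sj: "JU x \<union> JD x \<subseteq> Sj"
  by (auto simp: JU_def JD_def Sj_def)

lemma js_sum_simple:
  assumes x: "simple_level V x"
  shows "summable (\<lambda>i. js (ej i) x) \<and> summable (\<lambda>i. norm (js (ej i) x)) \<and>
     (\<Sum>i. js (ej i) x) = real (card (JU x)) - real (card (JD x))"
proof -
  define N where "N = ej -` (JU x \<union> JD x)"
  have inj: "inj ej" using ej_bij by (simp add: bij_betw_def)
  have fN: "finite N" unfolding N_def by (rule finite_vimageI[OF JUD_finite[OF x] inj])
  have z: "\<And>i. i \<notin> N \<Longrightarrow> js (ej i) x = 0"
  proof -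
    fix i assume "i \<notin> N"
    have "ej i \<in> Sj" using ej_bij by (auto simp: bij_betw_def)
    hence "ej i \<in> {0<..t}" using Sj_sub by auto
    thus "js (ej i) x = 0" using js_simple[OF x, of "ej i"] \<open>i \<notin> N\<close> by (auto simp: N_def)
  qed
  have s1: "summable (\<lambda>i. js (ej i) x)" by (rule summable_finite[OF fN]) (use z in auto)
  have s2: "summable (\<lambda>i. norm (js (ej i) x))" by (rule summable_finite[OF fN]) (use z in auto)
  have "(\<Sum>i. js (ej i) x) = (\<Sum>i\<in>N. js (ej i) x)" by (rule suminf_finite[OF fN]) (use z in auto)
  also have "\<dots> = (\<Sum>s\<in>ej ` N. js s x)"
    using sum.reindex[OF inj_on_subset[OF inj subset_UNIV], of "\<lambda>s. js s x" N] by simp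
  also have "ej ` N = JU x \<union> JD x"
    unfolding N_def image_vimage_eq using JUD_Sj[of x] ej_bij unfolding bij_betw_def by auto
  also have "(\<Sum>s\<in>JU x \<union> JD x. js s x) = (\<Sum>s\<in>JU x. js s x) + (\<Sum>s\<in>JD x. js s x)"
    by (rule sum.union_disjoint) (use JUD_finite[OF x] in \<open>auto simp: JU_def JD_def\<close>)
  also have "(\<Sum>s\<in>JU x. js s x) = (\<Sum>s\<in>JU x. 1)"
    by (rule sum.cong) (auto simp: js_simple[OF x] JU_def)
  also have "(\<Sum>s\<in>JD x. js s x) = (\<Sum>s\<in>JD x. -1)"
    by (rule sum.cong) (auto simp: js_simple[OF x] JU_def JD_def)
  finally show ?thesis using s1 s2 by simp
qed


lemma FF: "integrable lborel (\<lambda>x. \<Sum>i. f' x * js (ej i) x) \<and>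
  (\<integral>x. (\<Sum>i. f' x * js (ej i) x) \<partial>lborel) = (\<Sum>\<^sub>\<infinity>s\<in>{0<..t}. gj s)"
proof -
  have i: "\<And>i. integrable lborel (\<lambda>x. f' x * js (ej i) x)" using js_int by blast
  have ae: "AE x in lborel. summable (\<lambda>i. norm (f' x * js (ej i) x))"
    using AE_simple_lborel[OF cad fv]
  proof eventually_elim
    case (elim x)
    have "summable (\<lambda>i. norm (f' x) * norm (js (ej i) x))"
      using js_sum_simple[OF elim] by (intro summable_mult) auto
    thus ?case by (simp add: abs_mult)
  qed
  have ejt: "\<And>i. ej i \<in> {0<..t}"
  proof -
    fix i have "ej i \<in> Sj" using ej_bij by (auto simp: bij_betw_def)
    thus "ej i \<in> {0<..t}" using Sj_sub by blast
  qed
  have sm: "summable (\<lambda>i. (\<integral>x. norm (f' x * js (ej i) x) \<partial>lborel))"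
  proof (rule summable_comparison_test')
    show "summable (\<lambda>i. Lb * \<bar>V (ej i) - vleft V (ej i)\<bar>)" using dv_summable by (rule summable_mult)
    fix n :: nat
    have "0 \<le> (\<integral>x. norm (f' x * js (ej n) x) \<partial>lborel)" by (rule integral_nonneg_AE) auto
    thus "norm (\<integral>x. norm (f' x * js (ej n) x) \<partial>lborel) \<le> Lb * \<bar>V (ej n) - vleft V (ej n)\<bar>"
      using js_int_bound[OF ejt[of n]] by simp
  qed
  have I: "integrable lborel (\<lambda>x. \<Sum>i. f' x * js (ej i) x)"
    by (rule integrable_suminf[OF i ae sm])
  have "(\<integral>x. (\<Sum>i. f' x * js (ej i) x) \<partial>lborel) = (\<Sum>i. (\<integral>x. f' x * js (ej i) x \<partial>lborel))"
    by (rule integral_suminf[OF i ae sm])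
  also have "\<dots> = (\<Sum>i. gj (ej i))" using js_int by simp
  also have "\<dots> = (\<Sum>\<^sub>\<infinity>s\<in>{0<..t}. gj s)" using gj_sums by (rule sums_unique[symmetric])
  finally show ?thesis using I by simp
qed

lemma JJ: "integrable lborel (\<lambda>x. \<Sum>i. js (ej i) x)"
proof -
  have i: "\<And>i. integrable lborel (js (ej i))" using js_abs by blast
  have ae: "AE x in lborel. summable (\<lambda>i. norm (js (ej i) x))"
    using AE_simple_lborel[OF cad fv] by eventually_elim (use js_sum_simple in blast)
  have sm: "summable (\<lambda>i. (\<integral>x. norm (js (ej i) x) \<partial>lborel))"
    using dv_summable js_abs by simp
  show ?thesis by (rule integrable_suminf[OF i ae sm])
qed

definition "Hc x = (if V 0 \<le> V t then indicator {V 0..V t} x else - indicator {V t..V 0} x :: real)"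

lemma H_int: "integrable lborel (\<lambda>x. f' x * Hc x) \<and> (\<integral>x. f' x * Hc x \<partial>lborel) = f (V t) - f (V 0)"
proof (cases "V 0 \<le> V t")
  case True
  have "integrable lborel (\<lambda>x. indicator {V 0..V t} x * f' x) \<and>
     (\<integral>x. indicator {V 0..V t} x * f' x \<partial>lborel) = f (V t) - f (V 0)"
    by (rule int_Icc[OF True cf der])
  thus ?thesis using True by (simp add: Hc_def mult.commute)
next
  case False
  have i: "integrable lborel (\<lambda>x. indicator {V t..V 0} x * f' x) \<and>
     (\<integral>x. indicator {V t..V 0} x * f' x \<partial>lborel) = f (V 0) - f (V t)"
    by (rule int_Icc[OF _ cf der]) (use False in auto)
  have e: "(\<lambda>x. f' x * Hc x) = (\<lambda>x. - (indicator {V t..V 0} x * f' x))"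
    using False by (auto simp: Hc_def)
  show ?thesis unfolding e using i by simp
qed

lemma H_meas: "Hc \<in> borel_measurable lborel"
  unfolding Hc_def[abs_def] by measurable

lemma ell_eq:
  assumes x: "simple_level V x" and x0: "x \<noteq> V 0" and xt: "x \<noteq> V t"
  shows "real_of_int (ell V x t) = Hc x - (\<Sum>i. js (ej i) x)"
proof -
  have NJ: "\<And>\<tau>. \<tau> > 0 \<Longrightarrow> V \<tau> \<noteq> vleft V \<tau> \<Longrightarrow> x \<noteq> V \<tau> \<and> x \<noteq> vleft V \<tau>"
    using x unfolding simple_level_def by auto
  have fin: "finite (crossing_times V x \<inter> {0..t})" using x unfolding simple_level_def by auto
  have G: "Gc V x t = (if x < V t then 1 else 0) - (if x < V 0 then 1 else 0)"
    by (rule sweep[OF cad NJ fin]) (use x0 xt tpos in auto)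
  have "Gc V x t = ell V x t + int (card (JU x)) - int (card (JD x))"
    unfolding Gc_def ell_def upcross_set_def downcross_set_def JU_def JD_def by simp
  hence "real_of_int (ell V x t) = real_of_int (Gc V x t) - (real (card (JU x)) - real (card (JD x)))"
    by simp
  also have "\<dots> = Hc x - (\<Sum>i. js (ej i) x)"
    unfolding G js_sum_simple[OF x, THEN conjunct2, THEN conjunct2] using x0 xt
    by (auto simp: Hc_def indicator_def)
  finally show ?thesis .
qed


lemma main: "(\<forall>x. simple_level V x \<longrightarrow> finite (upcross_set V x t) \<and> finite (downcross_set V x t))
    \<and> (AE x in lebesgue. simple_level V x)
    \<and> (\<lambda>x. real_of_int (ell V x t)) \<in> borel_measurable lebesgue
    \<and> integrable lebesgue (\<lambda>x. f' x * real_of_int (ell V x t))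
    \<and> (\<lambda>s. f (V s) - f (vleft V s)) summable_on {0<..t}
    \<and> f (V t) - f (V 0) =
        (\<integral>x. f' x * real_of_int (ell V x t) \<partial>lebesgue)
        + (\<Sum>\<^sub>\<infinity>s\<in>{0<..t}. f (V s) - f (vleft V s))"
proof -
  have fin: "\<forall>x. simple_level V x \<longrightarrow> finite (upcross_set V x t) \<and> finite (downcross_set V x t)"
  proof (intro allI impI conjI)
    fix x assume x: "simple_level V x"
    hence f0: "finite (crossing_times V x \<inter> {0..t})" unfolding simple_level_def by auto
    show "finite (upcross_set V x t)"
      by (rule finite_subset[OF _ f0]) (auto simp: upcross_set_def incr_through_def crossing_times_def)
    show "finite (downcross_set V x t)"
      by (rule finite_subset[OF _ f0]) (auto simp: downcross_set_def decr_through_def incr_through_def crossing_times_def)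
  qed
  have nV: "AE x in lborel. x \<notin> {V 0, V t}"
    by (rule AE_not_in, rule countable_imp_null_set_lborel) simp
  have AEl: "AE x in lborel. simple_level V x \<and> x \<noteq> V 0 \<and> x \<noteq> V t"
    using AE_simple_lborel[OF cad fv] nV by eventually_elim auto
  have AE1: "AE x in lebesgue. Hc x - (\<Sum>i. js (ej i) x) = real_of_int (ell V x t)"
    by (rule AE_completion) (use AEl in \<open>eventually_elim, use ell_eq in auto\<close>)
  have mJ: "(\<lambda>x. Hc x - (\<Sum>i. js (ej i) x)) \<in> borel_measurable lborel"
    using H_meas borel_measurable_integrable[OF JJ] by measurable
  have meas: "(\<lambda>x. real_of_int (ell V x t)) \<in> borel_measurable lebesgue"
    by (rule borel_measurable_AE[OF measurable_completion[OF mJ] AE1])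
  define \<Phi> where "\<Phi> x = f' x * Hc x - (\<Sum>i. f' x * js (ej i) x)" for x
  have iP: "integrable lborel \<Phi>" unfolding \<Phi>_def
    by (rule Bochner_Integration.integrable_diff[OF H_int[THEN conjunct1] FF[THEN conjunct1]])
  have mP: "\<Phi> \<in> borel_measurable lborel" using iP by (rule borel_measurable_integrable)
  have fm: "f' \<in> borel_measurable lborel"
    using borel_measurable_continuous_onI[OF cf] by (simp add: measurable_lborel1)
  have AE2: "AE x in lebesgue. \<Phi> x = f' x * real_of_int (ell V x t)"
  proof (rule AE_completion)
    show "AE x in lborel. \<Phi> x = f' x * real_of_int (ell V x t)"
      using AEl
    proof eventually_elim
      case (elim x)
      have "(\<Sum>i. f' x * js (ej i) x) = f' x * (\<Sum>i. js (ej i) x)"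
        using js_sum_simple[of x] elim by (intro suminf_mult) auto
      moreover have "real_of_int (ell V x t) = Hc x - (\<Sum>i. js (ej i) x)" using ell_eq[of x] elim by auto
      ultimately show ?case unfolding \<Phi>_def by (simp add: right_diff_distrib)
    qed
  qed
  have mE: "(\<lambda>x. f' x * real_of_int (ell V x t)) \<in> borel_measurable lebesgue"
    using measurable_completion[OF fm] meas by measurable
  have iL: "integrable lebesgue \<Phi>" using iP integrable_completion[OF mP] by simp
  have int: "integrable lebesgue (\<lambda>x. f' x * real_of_int (ell V x t))"
    using iL integrable_cong_AE[OF measurable_completion[OF mP] mE AE2] by simp
  have "(\<integral>x. f' x * real_of_int (ell V x t) \<partial>lebesgue) = (\<integral>x. \<Phi> x \<partial>lebesgue)"
    by (rule integral_cong_AE[OF mE measurable_completion[OF mP]]) (use AE2 in auto)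
  also have "\<dots> = (\<integral>x. \<Phi> x \<partial>lborel)" by (rule integral_completion[OF mP])
  also have "\<dots> = (\<integral>x. f' x * Hc x \<partial>lborel) - (\<integral>x. (\<Sum>i. f' x * js (ej i) x) \<partial>lborel)"
    unfolding \<Phi>_def by (rule Bochner_Integration.integral_diff[OF H_int[THEN conjunct1] FF[THEN conjunct1]])
  also have "\<dots> = f (V t) - f (V 0) - (\<Sum>\<^sub>\<infinity>s\<in>{0<..t}. gj s)" using H_int FF by simp
  finally have eq: "f (V t) - f (V 0) = (\<integral>x. f' x * real_of_int (ell V x t) \<partial>lebesgue) + (\<Sum>\<^sub>\<infinity>s\<in>{0<..t}. gj s)"
    by simp
  show ?thesis
    using fin AE_simple[OF cad fv] meas int gj_summable eq unfolding gj_def[abs_def] by auto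
qed

end

theorem proposition2:
  fixes V f f' :: "real \<Rightarrow> real" and t :: real
  assumes "cadlag V" and "finite_variation V"
    and "\<And>x. (f has_real_derivative f' x) (at x)" and "continuous_on UNIV f'"
    and "t > 0"
  shows "(\<forall>x. simple_level V x \<longrightarrow> finite (upcross_set V x t) \<and> finite (downcross_set V x t))
    \<and> (AE x in lebesgue. simple_level V x)
    \<and> (\<lambda>x. real_of_int (ell V x t)) \<in> borel_measurable lebesgue
    \<and> integrable lebesgue (\<lambda>x. f' x * real_of_int (ell V x t))
    \<and> (\<lambda>s. f (V s) - f (vleft V s)) summable_on {0<..t}
    \<and> f (V t) - f (V 0) =
        (\<integral>x. f' x * real_of_int (ell V x t) \<partial>lebesgue)
        + (\<Sum>\<^sub>\<infinity>s\<in>{0<..t}. f (V s) - f (vleft V s))"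
  by (rule main[OF assms])

end
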